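(* Let $\lambda/\mu$ be an r-shape and $\mathbf a,\mathbf b$ column flags for it. Then $$\mathsf S^{\mathbf a,\mathbf b}_{\lambda/\mu}(\mathbf y/\mathbf z)=\sum_{T\in ST_{\lambda/\mu}(\mathbf a,\mathbf b)}wt(T).$$
   Context: Young diagrams are in English notation; cell $(i,j)$ is in row $i$, column $j$; $\lambda'$ is the conjugate partition; $\lambda/\mu=[\lambda]\setminus[\mu]$ for $\mu\subseteq\lambda$. An r-shape is a pair $(\lambda/\mu,r)$, $r\in\mathbb Z$, with shifted contents $c(i,j)=j-i+r-1+\lambda'_1$ (bottom-left cell has content $r$). Column flags: for $n\ge\lambda_1$, $\mathbf a,\mathbf b\in\mathbb Z^n$ with $a_i-a_{i+1}\le\mu'_i-\mu'_{i+1}+1$ and $b_i-b_{i+1}\le\lambda'_i-\lambda'_{i+1}+1$ whenever $\mu'_i<\lambda'_{i+1}$; conjugate flags $a'_i=a_i+c(\gamma_i)$, $b'_i=b_i+c(\delta_i)$ with $\gamma_i,\delta_i$ the top and bottom cells of column $i$. $\mathbf y=(y_i)_{i\in\mathbb Z}$, $\mathbf z=(z_i)_{i\in\mathbb Z}$, $\mathbf y_{a,b}=(y_a,\dots,y_b)$ (empty if $a>b$); $e_n(\mathbf x/\mathbf w)=\sum_{i=0}^n(-1)^{n-i}e_i(\mathbf x)h_{n-i}(\mathbf w)$ ($e_0=1$, $e_n=0$ for $n<0$). $\mathsf S^{\mathbf a,\mathbf b}_{\lambda/\mu}(\mathbf y/\mathbf z)=\det[e_{\lambda'_i-i-\mu'_j+j}(\mathbf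 y_{a_j,b_i}/\mathbf z_{a'_j,b'_i})]_{1\le i,j\le n}$. A flagged $\mathbb Z$-SSYT of r-shape $\lambda/\mu$ with flags $\mathbf a,\mathbf b$ is a filling $\tilde T=(\tilde T_{ij})$ of the cells by integers, weakly increasing left to right along rows, strictly increasing top to bottom along columns, with $a_j\le\tilde T_{ij}\le b_j$ for every cell in column $j$. From such $\tilde T$, a flagged super tableau $T$ is obtained by choosing, independently for each cell, either $T_{ij}=\tilde T_{ij}\in\mathbb Z$ or the primed entry $T_{ij}=(\tilde T_{ij}+c(i,j))'\in\mathbb Z'$ ($c$ the shifted content). $ST_{\lambda/\mu}(\mathbf a,\mathbf b)$ is the set of all super tableaux so obtained from all flagged $\mathbb Z$-SSYT. The weight is $wt(T)=\prod_{(i,j)}wt(T_{ij})$ with $wt(r)=y_r$ and $wt(r')=-z_r$ for $r\in\mathbb Z$. *)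

theory Defs
  imports Main "Jordan_Normal_Form.Determinant"
begin

(* Partitions are weakly decreasing lists of naturals; parts are 1-indexed,
   and lambda_i = 0 beyond the list. *)
definition is_partition :: "nat list \<Rightarrow> bool" where
  "is_partition lam \<longleftrightarrow> sorted_wrt (\<ge>) lam"

definition part_at :: "nat list \<Rightarrow> nat \<Rightarrow> nat" where
  "part_at lam i = (if 1 \<le> i \<and> i \<le> length lam then lam ! (i - 1) else 0)"

definition conj_part :: "nat list \<Rightarrow> nat \<Rightarrow> nat" where
  "conj_part lam j = card {i \<in> {1..length lam}. j \<le> part_at lam i}"

definition part_subseteq :: "nat list \<Rightarrow> nat list \<Rightarrow> bool" where
  "part_subseteq mu lam \<longleftrightarrow> (\<forall>i. part_at mu i \<le> part_at lam i)"

definition diagram :: "nat list \<Rightarrow> (nat \<times> nat) set" where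
  "diagram lam = {(i, j). 1 \<le> i \<and> 1 \<le> j \<and> j \<le> part_at lam i}"

definition skew :: "nat list \<Rightarrow> nat list \<Rightarrow> (nat \<times> nat) set" where
  "skew lam mu = diagram lam - diagram mu"

(* shifted content of the r-shape (lam/mu, r) *)
definition content :: "nat list \<Rightarrow> int \<Rightarrow> nat \<times> nat \<Rightarrow> int" where
  "content lam r c = int (snd c) - int (fst c) + r - 1 + int (conj_part lam 1)"

definition column_flags :: "nat list \<Rightarrow> nat list \<Rightarrow> nat \<Rightarrow> (nat \<Rightarrow> int) \<Rightarrow> (nat \<Rightarrow> int) \<Rightarrow> bool" where
  "column_flags lam mu n a b \<longleftrightarrow> part_at lam 1 \<le> n \<and>
     (\<forall>i. 1 \<le> i \<and> i < n \<and> conj_part mu i < conj_part lam (i + 1) \<longrightarrow>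
        a i - a (i + 1) \<le> int (conj_part mu i) - int (conj_part mu (i + 1)) + 1 \<and>
        b i - b (i + 1) \<le> int (conj_part lam i) - int (conj_part lam (i + 1)) + 1)"

(* conjugate flags: gamma_i = (mu'_i + 1, i) top cell, delta_i = (lam'_i, i) bottom cell of column i *)
definition conj_flag_a :: "nat list \<Rightarrow> nat list \<Rightarrow> int \<Rightarrow> (nat \<Rightarrow> int) \<Rightarrow> nat \<Rightarrow> int" where
  "conj_flag_a lam mu r a i = a i + content lam r (conj_part mu i + 1, i)"

definition conj_flag_b :: "nat list \<Rightarrow> int \<Rightarrow> (nat \<Rightarrow> int) \<Rightarrow> nat \<Rightarrow> int" where
  "conj_flag_b lam r b i = b i + content lam r (conj_part lam i, i)"

definition esym :: "(int \<Rightarrow> 'a::comm_ring_1) \<Rightarrow> int \<Rightarrow> int \<Rightarrow> nat \<Rightarrow> 'a" where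
  "esym y a b k = (\<Sum>S\<in>{S. S \<subseteq> {a..b} \<and> card S = k}. \<Prod>i\<in>S. y i)"

definition hsym :: "(int \<Rightarrow> 'a::comm_ring_1) \<Rightarrow> int \<Rightarrow> int \<Rightarrow> nat \<Rightarrow> 'a" where
  "hsym z a b k = (\<Sum>m\<in>{m. (\<forall>i. i \<notin> {a..b} \<longrightarrow> m i = 0) \<and> sum m {a..b} = k}.
                      \<Prod>i\<in>{a..b}. z i ^ m i)"

definition esup :: "(int \<Rightarrow> 'a::comm_ring_1) \<Rightarrow> (int \<Rightarrow> 'a) \<Rightarrow> int \<Rightarrow> int \<Rightarrow> int \<Rightarrow> int \<Rightarrow> int \<Rightarrow> 'a" where
  "esup y z a b a' b' n = (if n < 0 then 0 else
     (\<Sum>i\<in>{0..nat n}. (-1) ^ (nat n - i) * esym y a b i * hsym z a' b' (nat n - i)))"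

definition flagged_S :: "nat list \<Rightarrow> nat list \<Rightarrow> int \<Rightarrow> nat \<Rightarrow> (nat \<Rightarrow> int) \<Rightarrow> (nat \<Rightarrow> int)
    \<Rightarrow> (int \<Rightarrow> 'a::comm_ring_1) \<Rightarrow> (int \<Rightarrow> 'a) \<Rightarrow> 'a" where
  "flagged_S lam mu r n a b y z = det (mat n n (\<lambda>(i0, j0).
     let i = i0 + 1; j = j0 + 1 in
     esup y z (a j) (b i) (conj_flag_a lam mu r a j) (conj_flag_b lam r b i)
       (int (conj_part lam i) - int i - int (conj_part mu j) + int j)))"

definition flagged_SSYT :: "nat list \<Rightarrow> nat list \<Rightarrow> (nat \<Rightarrow> int) \<Rightarrow> (nat \<Rightarrow> int) \<Rightarrow> (nat \<times> nat \<Rightarrow> int) \<Rightarrow> bool" where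
  "flagged_SSYT lam mu a b T \<longleftrightarrow>
     (\<forall>i j. (i, j) \<in> skew lam mu \<and> (i, j + 1) \<in> skew lam mu \<longrightarrow> T (i, j) \<le> T (i, j + 1)) \<and>
     (\<forall>i j. (i, j) \<in> skew lam mu \<and> (i + 1, j) \<in> skew lam mu \<longrightarrow> T (i, j) < T (i + 1, j)) \<and>
     (\<forall>i j. (i, j) \<in> skew lam mu \<longrightarrow> a j \<le> T (i, j) \<and> T (i, j) \<le> b j)"

(* super tableau entries: Inl r = r \<in> Z, Inr r = r' \<in> Z'.  Cells in P are primed. *)
definition super_of :: "nat list \<Rightarrow> nat list \<Rightarrow> int \<Rightarrow> (nat \<times> nat \<Rightarrow> int) \<Rightarrow> (nat \<times> nat) set
    \<Rightarrow> nat \<times> nat \<Rightarrow> int + int" where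
  "super_of lam mu r T P = (\<lambda>c. if c \<in> skew lam mu then
       (if c \<in> P then Inr (T c + content lam r c) else Inl (T c)) else undefined)"

definition ST :: "nat list \<Rightarrow> nat list \<Rightarrow> int \<Rightarrow> (nat \<Rightarrow> int) \<Rightarrow> (nat \<Rightarrow> int) \<Rightarrow> (nat \<times> nat \<Rightarrow> int + int) set" where
  "ST lam mu r a b = {super_of lam mu r T P | T P. flagged_SSYT lam mu a b T \<and> P \<subseteq> skew lam mu}"

definition wt_entry :: "(int \<Rightarrow> 'a::comm_ring_1) \<Rightarrow> (int \<Rightarrow> 'a) \<Rightarrow> int + int \<Rightarrow> 'a" where
  "wt_entry y z e = (case e of Inl r \<Rightarrow> y r | Inr r \<Rightarrow> - z r)"

definition wt :: "nat list \<Rightarrow> nat list \<Rightarrow> (int \<Rightarrow> 'a::comm_ring_1) \<Rightarrow> (int \<Rightarrow> 'a) \<Rightarrow> (nat \<times> nat \<Rightarrow> int + int) \<Rightarrow> 'a" where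
  "wt lam mu y z T = (\<Prod>c\<in>skew lam mu. wt_entry y z (T c))"

end

theory Submission
  imports Defs
begin

lemma esym_lt: "b < a \<Longrightarrow> esym y a b k = (if k = 0 then 1 else 0)"
proof -
  assume "b < a"
  then have e: "{a..b} = {}" by simp
  have "{S. S \<subseteq> {a..b} \<and> card S = k} = (if k = 0 then {{}} else {})"
    using e by auto
  then show ?thesis unfolding esym_def by simp
qed

lemma esym_0: "esym y a b 0 = 1"
proof -
  have "{S. S \<subseteq> {a..b} \<and> card S = 0} = {{}}"
    by (auto dest: finite_subset[OF _ finite_atLeastAtMost_int])
  then show ?thesis unfolding esym_def by simp
qed

lemma esym_big: "int k > b - a + 1 \<Longrightarrow> k > 0 \<Longrightarrow> esym y a b k = 0"
proof -
  assume k: "int k > b - a + 1" and k0: "k > 0"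
  have "{S. S \<subseteq> {a..b} \<and> card S = k} = {}"
  proof (rule ccontr)
    assume "{S. S \<subseteq> {a..b} \<and> card S = k} \<noteq> {}"
    then obtain S where S: "S \<subseteq> {a..b}" "card S = k" by auto
    then have "card S \<le> card {a..b}" by (intro card_mono) auto
    then show False using S k k0 by simp
  qed
  note e = this
  show ?thesis unfolding esym_def e by simp
qed

lemma subsets_split:
  fixes a b :: int
  assumes "a \<le> b"
  shows "sum f {S. S \<subseteq> {a..b} \<and> card S = Suc k} =
         sum f {S. S \<subseteq> {a..b-1} \<and> card S = Suc k} +
         sum (\<lambda>S. f (insert b S)) {S. S \<subseteq> {a..b-1} \<and> card S = k}"
proof -
  let ?A = "{S. S \<subseteq> {a..b-1} \<and> card S = Suc k}"
  let ?B0 = "{S. S \<subseteq> {a..b-1} \<and> card S = k}"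
  have fin: "finite {S. S \<subseteq> {a..b} \<and> card S = Suc k}"
    by (rule finite_subset[of _ "Pow {a..b}"]) auto
  have eq: "{S. S \<subseteq> {a..b} \<and> card S = Suc k} = ?A \<union> insert b ` ?B0"
  proof (intro equalityI subsetI)
    fix S assume "S \<in> {S. S \<subseteq> {a..b} \<and> card S = Suc k}"
    then have S: "S \<subseteq> {a..b}" "card S = Suc k" by auto
    have finS: "finite S" using S(1) finite_subset by blast
    show "S \<in> ?A \<union> insert b ` ?B0"
    proof (cases "b \<in> S")
      case True
      have "S - {b} \<in> ?B0" using S True finS by auto
      moreover have "S = insert b (S - {b})" using True by auto
      ultimately show ?thesis by blast
    next
      case False
      have "S \<subseteq> {a..b-1}"
      proof
        fix x assume x: "x \<in> S"
        then have "x \<in> {a..b}" using S(1) by blast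
        moreover have "x \<noteq> b" using x False by auto
        ultimately show "x \<in> {a..b-1}" by auto
      qed
      then show ?thesis using S by auto
    qed
  next
    fix S assume "S \<in> ?A \<union> insert b ` ?B0"
    then show "S \<in> {S. S \<subseteq> {a..b} \<and> card S = Suc k}"
    proof
      assume "S \<in> ?A" then show ?thesis by auto
    next
      assume "S \<in> insert b ` ?B0"
      then obtain T where T: "T \<subseteq> {a..b-1}" "card T = k" "S = insert b T" by auto
      have "b \<notin> T" using T by auto
      moreover have "finite T" using T(1) finite_subset by blast
      ultimately show ?thesis using T assms by auto
    qed
  qed
  have disj: "?A \<inter> insert b ` ?B0 = {}" by auto
  have finA: "finite ?A" by (rule finite_subset[of _ "Pow {a..b-1}"]) auto
  have finB: "finite ?B0" by (rule finite_subset[of _ "Pow {a..b-1}"]) auto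
  have inj: "inj_on (insert b) ?B0"
  proof (rule inj_onI)
    fix S T assume "S \<in> ?B0" "T \<in> ?B0" "insert b S = insert b T"
    then have "b \<notin> S" "b \<notin> T" "insert b S = insert b T" by auto
    then show "S = T" by (metis Diff_insert_absorb)
  qed
  have "sum f {S. S \<subseteq> {a..b} \<and> card S = Suc k} = sum f ?A + sum f (insert b ` ?B0)"
    unfolding eq by (rule sum.union_disjoint) (use finA finB disj in auto)
  also have "sum f (insert b ` ?B0) = sum (\<lambda>S. f (insert b S)) ?B0"
    using sum.reindex[OF inj] by simp
  finally show ?thesis .
qed

lemma esym_step:
  assumes "a \<le> b"
  shows "esym y a b (Suc k) = esym y a (b-1) (Suc k) + y b * esym y a (b-1) k"
proof -
  have "esym y a b (Suc k) = esym y a (b-1) (Suc k) +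
      (\<Sum>S\<in>{S. S \<subseteq> {a..b-1} \<and> card S = k}. \<Prod>i\<in>insert b S. y i)"
    unfolding esym_def by (rule subsets_split[OF assms])
  also have "(\<Sum>S\<in>{S. S \<subseteq> {a..b-1} \<and> card S = k}. \<Prod>i\<in>insert b S. y i) =
      (\<Sum>S\<in>{S. S \<subseteq> {a..b-1} \<and> card S = k}. y b * (\<Prod>i\<in>S. y i))"
  proof (rule sum.cong[OF refl])
    fix S assume "S \<in> {S. S \<subseteq> {a..b-1} \<and> card S = k}"
    then have "S \<subseteq> {a..b-1}" by auto
    then have "b \<notin> S" "finite S" using finite_subset by auto
    then show "(\<Prod>i\<in>insert b S. y i) = y b * (\<Prod>i\<in>S. y i)" by simp
  qed
  also have "\<dots> = y b * esym y a (b-1) k" unfolding esym_def by (simp add: sum_distrib_left)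
  finally show ?thesis .
qed

definition HS :: "int \<Rightarrow> int \<Rightarrow> nat \<Rightarrow> (int \<Rightarrow> nat) set" where
  "HS a b k = {m. (\<forall>i. i \<notin> {a..b} \<longrightarrow> m i = 0) \<and> sum m {a..b} = k}"

lemma hsym_HS: "hsym z a b k = (\<Sum>m\<in>HS a b k. \<Prod>i\<in>{a..b}. z i ^ m i)"
  unfolding hsym_def HS_def by simp

lemma finite_HS: "finite (HS a b k)"
proof (rule finite_subset)
  show "HS a b k \<subseteq> {f. \<forall>x. (x \<in> {a..b} \<longrightarrow> f x \<in> {0..k}) \<and> (x \<notin> {a..b} \<longrightarrow> f x = 0)}"
  proof
    fix m assume "m \<in> HS a b k"
    then have m: "\<forall>i. i \<notin> {a..b} \<longrightarrow> m i = 0" "sum m {a..b} = k" unfolding HS_def by auto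
    have "\<forall>x\<in>{a..b}. m x \<le> k" using m(2) member_le_sum[of _ "{a..b}" m] by fastforce
    then show "m \<in> {f. \<forall>x. (x \<in> {a..b} \<longrightarrow> f x \<in> {0..k}) \<and> (x \<notin> {a..b} \<longrightarrow> f x = 0)}"
      using m(1) by auto
  qed
  show "finite {f. \<forall>x. (x \<in> {a..b} \<longrightarrow> f x \<in> {0..k}) \<and> (x \<notin> {a..b} \<longrightarrow> f x = (0::nat))}"
    by (rule finite_set_of_finite_funs) auto
qed

lemma hsym_0: "hsym z a b 0 = 1"
proof -
  have "HS a b 0 = {\<lambda>_. 0}"
  proof (intro equalityI subsetI)
    fix m assume "m \<in> HS a b 0"
    then have m: "\<forall>i. i \<notin> {a..b} \<longrightarrow> m i = 0" "sum m {a..b} = 0" unfolding HS_def by auto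
    then have "\<forall>i\<in>{a..b}. m i = 0" by simp
    with m(1) have "m = (\<lambda>_. 0)" by (intro ext) (metis atLeastAtMost_iff)
    then show "m \<in> {\<lambda>_. 0}" by simp
  qed (auto simp: HS_def)
  then show ?thesis unfolding hsym_HS by simp
qed

lemma hsym_lt: "b < a \<Longrightarrow> k > 0 \<Longrightarrow> hsym z a b k = 0"
proof -
  assume "b < a" "k > 0"
  then have "HS a b k = {}" unfolding HS_def by auto
  then show ?thesis unfolding hsym_HS by simp
qed

lemma hsym_step:
  assumes ab: "a \<le> b"
  shows "hsym z a b (Suc k) = hsym z a (b-1) (Suc k) + z b * hsym z a b k"
proof -
  let ?P = "\<lambda>c m. \<Prod>i\<in>{a..c}. z i ^ m i"
  let ?X = "{m \<in> HS a b (Suc k). m b = 0}"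
  let ?Y = "{m \<in> HS a b (Suc k). m b \<noteq> 0}"
  have split: "HS a b (Suc k) = ?X \<union> ?Y" by auto
  have fX: "finite ?X" "finite ?Y" using finite_HS[of a b "Suc k"] by auto
  have ins: "{a..b} = insert b {a..b-1}" using ab by auto
  have bn: "b \<notin> {a..b-1}" by simp
  have s1: "sum (?P b) (HS a b (Suc k)) = sum (?P b) ?X + sum (?P b) ?Y"
    by (subst split, rule sum.union_disjoint) (use fX in auto)
  have X: "?X = HS a (b-1) (Suc k)"
  proof (intro equalityI subsetI)
    fix m assume "m \<in> ?X"
    then have m: "\<forall>i. i \<notin> {a..b} \<longrightarrow> m i = 0" "sum m {a..b} = Suc k" "m b = 0"
      unfolding HS_def by auto
    have "sum m {a..b} = sum m {a..b-1}" unfolding ins using bn m(3) by simp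
    moreover have "\<forall>i. i \<notin> {a..b-1} \<longrightarrow> m i = 0"
    proof (intro allI impI)
      fix i assume "i \<notin> {a..b-1}"
      then have "i \<notin> {a..b} \<or> i = b" by auto
      then show "m i = 0" using m(1) m(3) by blast
    qed
    ultimately show "m \<in> HS a (b-1) (Suc k)" using m(2) unfolding HS_def by simp
  next
    fix m assume "m \<in> HS a (b-1) (Suc k)"
    then have m: "\<forall>i. i \<notin> {a..b-1} \<longrightarrow> m i = 0" "sum m {a..b-1} = Suc k"
      unfolding HS_def by auto
    have mb: "m b = 0" using m(1) by simp
    have "sum m {a..b} = sum m {a..b-1}" unfolding ins using bn mb by simp
    moreover have "\<forall>i. i \<notin> {a..b} \<longrightarrow> m i = 0" using m(1) by auto
    ultimately show "m \<in> ?X" using m(2) mb unfolding HS_def by simp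
  qed
  have PX: "sum (?P b) ?X = hsym z a (b-1) (Suc k)"
  proof -
    have "sum (?P b) ?X = sum (?P (b-1)) ?X"
    proof (rule sum.cong[OF refl])
      fix m assume "m \<in> ?X"
      then have "m b = 0" by simp
      then show "?P b m = ?P (b-1) m" unfolding ins using bn by simp
    qed
    then show ?thesis unfolding X hsym_HS by simp
  qed
  have PY: "sum (?P b) ?Y = z b * hsym z a b k"
  proof -
    have "sum (?P b) ?Y = (\<Sum>m\<in>HS a b k. ?P b (m(b := Suc (m b))))"
    proof (rule sum.reindex_bij_witness[of _ "\<lambda>m. m(b := Suc (m b))" "\<lambda>m. m(b := m b - 1)"])
      fix m assume "m \<in> ?Y"
      then show "(m(b := m b - 1))(b := Suc ((m(b := m b - 1)) b)) = m" by auto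
    next
      fix m assume "m \<in> ?Y"
      then have m: "\<forall>i. i \<notin> {a..b} \<longrightarrow> m i = 0" "sum m {a..b} = Suc k" "m b \<noteq> 0"
        unfolding HS_def by auto
      have "sum (m(b := m b - 1)) {a..b} = sum m {a..b-1} + (m b - 1)"
        unfolding ins using bn by simp
      also have "sum m {a..b} = sum m {a..b-1} + m b" unfolding ins using bn by simp
      ultimately have "sum (m(b := m b - 1)) {a..b} = k" using m by simp
      then show "m(b := m b - 1) \<in> HS a b k" using m(1) ab unfolding HS_def by auto
    next
      fix m assume "m \<in> HS a b k"
      then show "(m(b := Suc (m b)))(b := (m(b := Suc (m b))) b - 1) = m" by auto
    next
      fix m assume "m \<in> HS a b k"
      then have m: "\<forall>i. i \<notin> {a..b} \<longrightarrow> m i = 0" "sum m {a..b} = k"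
        unfolding HS_def by auto
      have "sum (m(b := Suc (m b))) {a..b} = sum m {a..b-1} + Suc (m b)"
        unfolding ins using bn by simp
      also have "sum m {a..b} = sum m {a..b-1} + m b" unfolding ins using bn by simp
      ultimately have "sum (m(b := Suc (m b))) {a..b} = Suc k" using m by simp
      then show "m(b := Suc (m b)) \<in> ?Y" using m(1) ab unfolding HS_def by auto
    next
      fix m assume "m \<in> ?Y"
      then show "?P b ((m(b := m b - 1))(b := Suc ((m(b := m b - 1)) b))) = ?P b m" by simp
    qed
    also have "\<dots> = (\<Sum>m\<in>HS a b k. z b * ?P b m)"
    proof (rule sum.cong[OF refl])
      fix m
      have "?P b (m(b := Suc (m b))) = z b ^ Suc (m b) * ?P (b-1) (m(b := Suc (m b)))"
        unfolding ins using bn by simp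
      also have "?P (b-1) (m(b := Suc (m b))) = ?P (b-1) m"
        by (rule prod.cong) auto
      also have "?P b m = z b ^ m b * ?P (b-1) m" unfolding ins using bn by simp
      ultimately show "?P b (m(b := Suc (m b))) = z b * ?P b m" by (simp add: mult.assoc)
    qed
    also have "\<dots> = z b * hsym z a b k" unfolding hsym_HS by (simp add: sum_distrib_left)
    finally show ?thesis .
  qed
  show ?thesis unfolding hsym_HS[of z a b "Suc k"] using s1 PX PY by simp
qed

lemma esup_alg:
  fixes e e' h h' :: "nat \<Rightarrow> 'a::comm_ring_1"
  assumes e0: "e 0 = e' 0" and eS: "\<And>i. e (Suc i) = e' (Suc i) + yb * e' i"
    and h0: "h 0 = h' 0" and hS: "\<And>m. h (Suc m) = h' (Suc m) + zb * h m"
  shows "(\<Sum>i\<in>{0..Suc k}. (-1)^(Suc k - i) * e i * h (Suc k - i)) =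
     (\<Sum>i\<in>{0..Suc k}. (-1)^(Suc k - i) * e' i * h' (Suc k - i)) +
     (yb - zb) * (\<Sum>i\<in>{0..k}. (-1)^(k - i) * e' i * h (k - i))"
proof -
  let ?B = "\<Sum>i\<in>{0..k}. (-1)^(k - i) * e' i * h (k - i)"
  have 1: "(\<Sum>i\<in>{0..Suc k}. (-1)^(Suc k - i) * e i * h (Suc k - i)) =
     (\<Sum>i\<in>{0..Suc k}. (-1)^(Suc k - i) * e' i * h (Suc k - i)) + yb * ?B"
  proof -
    have "(\<Sum>i\<in>{0..Suc k}. (-1)^(Suc k - i) * e i * h (Suc k - i)) =
      (-1)^(Suc k) * e 0 * h (Suc k) + (\<Sum>i\<in>{0..k}. (-1)^(k - i) * e (Suc i) * h (k - i))"
      by (subst sum.atLeast0_atMost_Suc_shift) simp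
    also have "\<dots> = (-1)^(Suc k) * e' 0 * h (Suc k) + (\<Sum>i\<in>{0..k}. (-1)^(k - i) * e' (Suc i) * h (k - i)) + yb * ?B"
      by (simp add: e0 eS algebra_simps sum.distrib sum_distrib_left)
    also have "\<dots> = (\<Sum>i\<in>{0..Suc k}. (-1)^(Suc k - i) * e' i * h (Suc k - i)) + yb * ?B"
      by (subst sum.atLeast0_atMost_Suc_shift) simp
    finally show ?thesis .
  qed
  have 2: "(\<Sum>i\<in>{0..Suc k}. (-1)^(Suc k - i) * e' i * h (Suc k - i)) =
     (\<Sum>i\<in>{0..Suc k}. (-1)^(Suc k - i) * e' i * h' (Suc k - i)) - zb * ?B"
  proof -
    have "(\<Sum>i\<in>{0..Suc k}. (-1)^(Suc k - i) * e' i * h (Suc k - i)) =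
       (\<Sum>i\<in>{0..k}. (-1)^(Suc k - i) * e' i * h (Suc k - i)) + e' (Suc k) * h 0"
      by simp
    also have "(\<Sum>i\<in>{0..k}. (-1)^(Suc k - i) * e' i * h (Suc k - i)) =
       (\<Sum>i\<in>{0..k}. (-1)^(Suc k - i) * e' i * h' (Suc k - i)) - zb * ?B"
    proof -
      have "(\<Sum>i\<in>{0..k}. (-1)^(Suc k - i) * e' i * h (Suc k - i)) =
        (\<Sum>i\<in>{0..k}. (-1)^(Suc k - i) * e' i * h' (Suc k - i) - zb * ((-1)^(k - i) * e' i * h (k - i)))"
      proof (rule sum.cong[OF refl])
        fix i assume "i \<in> {0..k}"
        then have i: "Suc k - i = Suc (k - i)" by auto
        show "(-1)^(Suc k - i) * e' i * h (Suc k - i) =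
          (-1)^(Suc k - i) * e' i * h' (Suc k - i) - zb * ((-1)^(k - i) * e' i * h (k - i))"
          unfolding i by (simp add: hS algebra_simps)
      qed
      then show ?thesis by (simp add: sum_subtractf sum_distrib_left)
    qed
    also have "(\<Sum>i\<in>{0..Suc k}. (-1)^(Suc k - i) * e' i * h' (Suc k - i)) =
       (\<Sum>i\<in>{0..k}. (-1)^(Suc k - i) * e' i * h' (Suc k - i)) + e' (Suc k) * h' 0"
      by simp
    ultimately show ?thesis using h0 by (simp add: algebra_simps)
  qed
  show ?thesis using 1 2 by (simp add: algebra_simps)
qed

definition rk :: "int set \<Rightarrow> int \<Rightarrow> nat" where
  "rk S s = card {x \<in> S. x < s}"

definition colsum :: "(int \<Rightarrow> 'a::comm_ring_1) \<Rightarrow> (int \<Rightarrow> 'a) \<Rightarrow> int \<Rightarrow> int \<Rightarrow> int \<Rightarrow> int \<Rightarrow> 'a" where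
  "colsum y z cc a b l = (\<Sum>S\<in>{S. S \<subseteq> {a..b} \<and> int (card S) = l}.
      \<Prod>s\<in>S. (y s - z (s + cc - int (rk S s))))"

lemma colsum_step:
  assumes ab: "a \<le> b"
  shows "colsum y z cc a b (int (Suc k)) =
     colsum y z cc a (b-1) (int (Suc k)) + (y b - z (b + cc - int k)) * colsum y z cc a (b-1) (int k)"
proof -
  let ?f = "\<lambda>S. \<Prod>s\<in>S. (y s - z (s + cc - int (rk S s)))"
  have c: "\<And>k c. {S. S \<subseteq> {a..c} \<and> int (card S) = int k} = {S. S \<subseteq> {a..c} \<and> card S = k}"
    by simp
  have "colsum y z cc a b (int (Suc k)) = sum ?f {S. S \<subseteq> {a..b-1} \<and> card S = Suc k} +
      sum (\<lambda>S. ?f (insert b S)) {S. S \<subseteq> {a..b-1} \<and> card S = k}"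
    unfolding colsum_def c by (rule subsets_split[OF ab])
  also have "sum (\<lambda>S. ?f (insert b S)) {S. S \<subseteq> {a..b-1} \<and> card S = k} =
      sum (\<lambda>S. (y b - z (b + cc - int k)) * ?f S) {S. S \<subseteq> {a..b-1} \<and> card S = k}"
  proof (rule sum.cong[OF refl])
    fix S assume "S \<in> {S. S \<subseteq> {a..b-1} \<and> card S = k}"
    then have S: "S \<subseteq> {a..b-1}" "card S = k" by auto
    then have fin: "finite S" and bS: "b \<notin> S" using finite_subset by auto
    have rb: "rk (insert b S) b = k"
    proof -
      have "{x \<in> insert b S. x < b} = S" using S(1) by auto
      then show ?thesis unfolding rk_def using S(2) by simp
    qed
    have rs: "\<And>s. s \<in> S \<Longrightarrow> rk (insert b S) s = rk S s"
    proof -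
      fix s assume "s \<in> S"
      then have "s < b" using S(1) by auto
      then have "{x \<in> insert b S. x < s} = {x \<in> S. x < s}" by auto
      then show "rk (insert b S) s = rk S s" unfolding rk_def by simp
    qed
    have "?f (insert b S) = (y b - z (b + cc - int (rk (insert b S) b))) *
        (\<Prod>s\<in>S. (y s - z (s + cc - int (rk (insert b S) s))))"
      using fin bS by simp
    also have "(\<Prod>s\<in>S. (y s - z (s + cc - int (rk (insert b S) s)))) = ?f S"
      by (rule prod.cong) (auto simp: rs)
    finally show "?f (insert b S) = (y b - z (b + cc - int k)) * ?f S" using rb by simp
  qed
  finally show ?thesis unfolding colsum_def c by (simp add: sum_distrib_left)
qed

lemma colsum_neg: "l < 0 \<Longrightarrow> colsum y z cc a b l = 0"
proof -
  assume "l < 0"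
  then have e: "{S. S \<subseteq> {a..b} \<and> int (card S) = l} = {}" by auto
  show ?thesis unfolding colsum_def e by simp
qed

lemma colsum_0: "colsum y z cc a b 0 = 1"
proof -
  have "{S. S \<subseteq> {a..b} \<and> int (card S) = 0} = {{}}"
    by (auto dest: finite_subset[OF _ finite_atLeastAtMost_int])
  then show ?thesis unfolding colsum_def by simp
qed

lemma colsum_big: "l > b - a + 1 \<Longrightarrow> l > 0 \<Longrightarrow> colsum y z cc a b l = 0"
proof -
  assume l: "l > b - a + 1" "l > 0"
  have "{S. S \<subseteq> {a..b} \<and> int (card S) = l} = {}"
  proof (rule ccontr)
    assume "{S. S \<subseteq> {a..b} \<and> int (card S) = l} \<noteq> {}"
    then obtain S where S: "S \<subseteq> {a..b}" "int (card S) = l" by auto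
    then have "card S \<le> card {a..b}" by (intro card_mono) auto
    then show False using S l by simp
  qed
  note e = this
  show ?thesis unfolding colsum_def e by simp
qed

lemma esup_nat: "esup y z a b a' b' (int n) =
  (\<Sum>i\<in>{0..n}. (-1)^(n - i) * esym y a b i * hsym z a' b' (n - i))"
  unfolding esup_def by simp

lemma esup_big:
  assumes "int (Suc k) > b - a + 1"
  shows "esup y z a b (a + cc) (b + cc - int (Suc k) + 1) (int (Suc k)) = 0"
proof -
  have "\<And>i. i \<in> {0..Suc k} \<Longrightarrow>
     (-1) ^ (Suc k - i) * esym y a b i * hsym z (a + cc) (b + cc - int (Suc k) + 1) (Suc k - i) = 0"
  proof -
    fix i assume i: "i \<in> {0..Suc k}"
    show "(-1) ^ (Suc k - i) * esym y a b i * hsym z (a + cc) (b + cc - int (Suc k) + 1) (Suc k - i) = 0"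
    proof (cases "i > 0 \<and> int i > b - a + 1")
      case True
      then show ?thesis using esym_big[of b a i y] by simp
    next
      case False
      then have "i < Suc k" using assms by auto
      then have "hsym z (a + cc) (b + cc - int (Suc k) + 1) (Suc k - i) = 0"
        using assms by (intro hsym_lt) auto
      then show ?thesis by simp
    qed
  qed
  then show ?thesis unfolding esup_nat by simp
qed

lemma col_esup_aux:
  "nat (b - a + 1) = N \<Longrightarrow> colsum y z cc a b l = esup y z a b (a + cc) (b + cc - l + 1) l"
proof (induction N arbitrary: b l)
  case (0 b l)
  show ?case
  proof (cases "l < 0")
    case True then show ?thesis by (simp add: colsum_neg esup_def)
  next
    case False
    show ?thesis
    proof (cases "l = 0")
      case True then show ?thesis by (simp add: colsum_0 esup_def esym_0 hsym_0)
    next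
      case False
      define k where "k = nat l - 1"
      have k: "l = int (Suc k)" using False \<open>\<not> l < 0\<close> unfolding k_def by simp
      have "l > b - a + 1" using 0 False \<open>\<not> l < 0\<close> by auto
      then show ?thesis using esup_big[where k=k and b=b and a=a and y=y and z=z and cc=cc] colsum_big[where l=l and b=b and a=a] k by simp
    qed
  qed
next
  case (Suc N b l)
  show ?case
  proof (cases "l < 0")
    case True then show ?thesis by (simp add: colsum_neg esup_def)
  next
    case False
    show ?thesis
    proof (cases "l = 0")
      case True then show ?thesis by (simp add: colsum_0 esup_def esym_0 hsym_0)
    next
      case False
      define k where "k = nat l - 1"
      have k: "l = int (Suc k)" using False \<open>\<not> l < 0\<close> unfolding k_def by simp
      show ?thesis
      proof (cases "l > b - a + 1")
        case True
        then show ?thesis using esup_big[where k=k and b=b and a=a and y=y and z=z and cc=cc] colsum_big[where l=l and b=b and a=a] k by simp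
      next
        case False
        then have ab: "a \<le> b" and kb: "int k \<le> b - a" using k by auto
        have N: "nat (b - 1 - a + 1) = N" using Suc.prems by auto
        let ?\<beta> = "b + cc - int k"
        have b1: "b - 1 + cc - int (Suc k) + 1 = ?\<beta> - 1" by simp
        have b2: "b - 1 + cc - int k + 1 = ?\<beta>" by simp
        have b3: "b + cc - l + 1 = ?\<beta>" using k by simp
        have IH1: "colsum y z cc a (b-1) (int (Suc k)) = esup y z a (b-1) (a + cc) (?\<beta> - 1) (int (Suc k))"
          using Suc.IH[OF N, of "int (Suc k)"] unfolding b1 .
        have IH2: "colsum y z cc a (b-1) (int k) = esup y z a (b-1) (a + cc) ?\<beta> (int k)"
          using Suc.IH[OF N, of "int k"] unfolding b2 .
        have hstep: "\<And>m. hsym z (a + cc) ?\<beta> (Suc m) = hsym z (a + cc) (?\<beta> - 1) (Suc m) + z ?\<beta> * hsym z (a + cc) ?\<beta> m"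
        proof -
          fix m
          have "a + cc \<le> ?\<beta>" using kb by simp
          then show "hsym z (a + cc) ?\<beta> (Suc m) = hsym z (a + cc) (?\<beta> - 1) (Suc m) + z ?\<beta> * hsym z (a + cc) ?\<beta> m"
            by (rule hsym_step)
        qed
        have estep: "\<And>i. esym y a b (Suc i) = esym y a (b-1) (Suc i) + y b * esym y a (b-1) i"
          using ab by (rule esym_step)
        have e0: "esym y a b 0 = esym y a (b-1) 0" by (simp add: esym_0)
        have h0: "hsym z (a + cc) ?\<beta> 0 = hsym z (a + cc) (?\<beta> - 1) 0" by (simp add: hsym_0)
        have "esup y z a b (a + cc) (b + cc - l + 1) l =
            esup y z a (b-1) (a + cc) (?\<beta> - 1) (int (Suc k)) +
            (y b - z ?\<beta>) * esup y z a (b-1) (a + cc) ?\<beta> (int k)"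
          unfolding b3 unfolding k esup_nat
          by (rule esup_alg[of "esym y a b" "esym y a (b-1)" "y b" "hsym z (a + cc) ?\<beta>"
              "hsym z (a + cc) (?\<beta> - 1)" "z ?\<beta>" k, OF e0 estep h0 hstep])
        moreover have "colsum y z cc a b l = colsum y z cc a (b-1) (int (Suc k)) +
            (y b - z ?\<beta>) * colsum y z cc a (b-1) (int k)"
          unfolding k by (rule colsum_step[OF ab])
        ultimately show ?thesis using IH1 IH2 by simp
      qed
    qed
  qed
qed

lemma col_esup: "colsum y z cc a b l = esup y z a b (a + cc) (b + cc - l + 1) l"
  using col_esup_aux by blast

definition lo :: "int \<Rightarrow> int set \<Rightarrow> int set" where "lo t X = {x\<in>X. x < t}"
definition hi :: "int \<Rightarrow> int set \<Rightarrow> int set" where "hi t X = {x\<in>X. t \<le> x}"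

lemma lohi_split: "lo t X \<union> hi t X = X" unfolding lo_def hi_def by auto
lemma lohi_disj: "lo t X \<inter> hi t Y = {}" unfolding lo_def hi_def by auto
lemma lo_lohi: "lo t (lo t X \<union> hi t Y) = lo t X" unfolding lo_def hi_def by auto
lemma hi_lohi: "hi t (lo t X \<union> hi t Y) = hi t Y" unfolding lo_def hi_def by auto

lemma card_lo: "card (lo t X) = rk X t" unfolding lo_def rk_def by simp

lemma card_hi: "finite X \<Longrightarrow> card (hi t X) = card X - rk X t"
proof -
  assume f: "finite X"
  have "card X = card (lo t X) + card (hi t X)"
    using card_Un_disjoint[of "lo t X" "hi t X"] f lohi_split[of t X] lohi_disj[of t X X]
    unfolding lo_def hi_def by auto
  then show ?thesis using card_lo by simp
qed

lemma rk_mono: "finite X \<Longrightarrow> t \<le> u \<Longrightarrow> rk X t \<le> rk X u"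
  unfolding rk_def by (rule card_mono) auto

lemma rk_le_card: "finite X \<Longrightarrow> rk X t \<le> card X"
  unfolding rk_def by (rule card_mono) auto

lemma rk_lohi_le:
  assumes "u \<le> t"
  shows "rk (lo t X \<union> hi t Y) u = rk X u"
proof -
  have "{x \<in> lo t X \<union> hi t Y. x < u} = {x \<in> X. x < u}"
    using assms unfolding lo_def hi_def by auto
  then show ?thesis unfolding rk_def by simp
qed

lemma rk_lohi_ge:
  assumes fX: "finite X" and fY: "finite Y" and tu: "t \<le> u"
  shows "int (rk (lo t X \<union> hi t Y) u) = int (rk X t) + int (rk Y u) - int (rk Y t)"
proof -
  have e1: "{x \<in> lo t X \<union> hi t Y. x < u} = {x \<in> X. x < t} \<union> {x \<in> Y. t \<le> x \<and> x < u}"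
    using tu unfolding lo_def hi_def by auto
  have c1: "card ({x \<in> X. x < t} \<union> {x \<in> Y. t \<le> x \<and> x < u}) =
      card {x \<in> X. x < t} + card {x \<in> Y. t \<le> x \<and> x < u}"
    by (rule card_Un_disjoint) (use fX fY in auto)
  have e2: "{x \<in> Y. x < u} = {x \<in> Y. x < t} \<union> {x \<in> Y. t \<le> x \<and> x < u}"
    using tu by auto
  have c2: "card ({x \<in> Y. x < t} \<union> {x \<in> Y. t \<le> x \<and> x < u}) =
      card {x \<in> Y. x < t} + card {x \<in> Y. t \<le> x \<and> x < u}"
    by (rule card_Un_disjoint) (use fY in auto)
  show ?thesis unfolding rk_def e1 c1 using e2 c2 by simp
qed

lemma rk_Suc: "finite X \<Longrightarrow> rk X (t + 1) = rk X t + (if t \<in> X then 1 else 0)"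
proof -
  assume f: "finite X"
  show ?thesis
  proof (cases "t \<in> X")
    case True
    have "{x \<in> X. x < t + 1} = insert t {x \<in> X. x < t}" using True by auto
    then show ?thesis unfolding rk_def using True f by simp
  next
    case False
    have "{x \<in> X. x < t + 1} = {x \<in> X. x < t}" using False by (auto, metis le_less)
    then show ?thesis unfolding rk_def using False by simp
  qed
qed

lemma prod_two_eq:
  assumes "finite I" "j \<in> I" "k \<in> I" "j \<noteq> k"
    and "\<And>x. x \<in> I \<Longrightarrow> x \<noteq> j \<Longrightarrow> x \<noteq> k \<Longrightarrow> f x = g x"
    and "f j * f k = g j * (g k :: 'a::comm_monoid_mult)"
  shows "prod f I = prod g I"
proof -
  have a1: "prod f I = f j * prod f (I - {j})" using assms(1,2) by (rule prod.remove)
  have a2: "prod f (I - {j}) = f k * prod f (I - {j} - {k})" using assms(1,3,4) by (intro prod.remove) auto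
  have a3: "prod f (I - {j} - {k}) = prod g (I - {j} - {k})" using assms(5) by (intro prod.cong) auto
  have b1: "prod g I = g j * prod g (I - {j})" using assms(1,2) by (rule prod.remove)
  have b2: "prod g (I - {j}) = g k * prod g (I - {j} - {k})" using assms(1,3,4) by (intro prod.remove) auto
  show ?thesis unfolding a1 a2 a3 b1 b2 using assms(6) by (metis mult.assoc)
qed

lemma pair_set_eqI: "(\<And>u v. (u, v) \<in> X \<longleftrightarrow> (u, v) \<in> Y) \<Longrightarrow> X = Y" by auto

locale lgv =
  fixes n :: nat and A B st en :: "nat \<Rightarrow> int" and F :: "int \<Rightarrow> int \<Rightarrow> 'a::comm_ring_1"
begin

definition Ht :: "nat \<Rightarrow> int set \<Rightarrow> int \<Rightarrow> int" where "Ht j S t = st j + int (rk S t)"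
definition Cols :: "(nat \<Rightarrow> nat) \<Rightarrow> nat \<Rightarrow> int set set" where
  "Cols p j = {S. S \<subseteq> {A j..B (p j)} \<and> int (card S) = en (p j) - st j}"
definition wtc :: "nat \<Rightarrow> int set \<Rightarrow> 'a" where "wtc j S = (\<Prod>s\<in>S. F s (Ht j S s))"
definition Fam :: "((nat \<Rightarrow> nat) \<times> (nat \<Rightarrow> int set)) set" where
  "Fam = Sigma {p. p permutes {0..<n}} (\<lambda>p. PiE {0..<n} (Cols p))"
definition V :: "(nat \<Rightarrow> nat) \<Rightarrow> (nat \<Rightarrow> int set) \<Rightarrow> nat \<Rightarrow> (int \<times> int) set" where
  "V p S j = {(t, Ht j (S j) t) | t. A j \<le> t \<and> t \<le> B (p j) + 1}"
definition bad :: "(nat \<Rightarrow> nat) \<times> (nat \<Rightarrow> int set) \<Rightarrow> bool" where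
  "bad x \<longleftrightarrow> (\<exists>j<n. \<exists>k<n. j \<noteq> k \<and> V (fst x) (snd x) j \<inter> V (fst x) (snd x) k \<noteq> {})"
definition fw :: "(nat \<Rightarrow> nat) \<times> (nat \<Rightarrow> int set) \<Rightarrow> 'a" where
  "fw x = of_int (sign (fst x)) * (\<Prod>j<n. wtc j (snd x j))"
definition swp :: "nat \<Rightarrow> nat \<Rightarrow> int \<Rightarrow> (nat \<Rightarrow> nat) \<times> (nat \<Rightarrow> int set) \<Rightarrow> (nat \<Rightarrow> nat) \<times> (nat \<Rightarrow> int set)" where
  "swp j k t x = (fst x \<circ> Transposition.transpose j k,
     (snd x)(j := lo t (snd x j) \<union> hi t (snd x k), k := lo t (snd x k) \<union> hi t (snd x j)))"

lemma V_mem: "(u, v) \<in> V p S j \<longleftrightarrow> A j \<le> u \<and> u \<le> B (p j) + 1 \<and> v = Ht j (S j) u"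
  unfolding V_def by auto

lemma Ht_swap_le:
  "u \<le> t \<Longrightarrow> Ht j (lo t X \<union> hi t Y) u = Ht j X u"
  unfolding Ht_def using rk_lohi_le by simp

lemma Ht_swap_ge:
  assumes "finite X" "finite Y" "t \<le> u" "Ht j X t = Ht k Y t"
  shows "Ht j (lo t X \<union> hi t Y) u = Ht k Y u"
  using rk_lohi_ge[OF assms(1-3)] assms(4) unfolding Ht_def by simp

lemma swp_V:
  assumes fj: "finite (S j)" and fk: "finite (S k)" and jk: "j \<noteq> k"
    and tj: "(t, h) \<in> V p S j" and tk: "(t, h) \<in> V p S k"
  defines "p' \<equiv> fst (swp j k t (p, S))" and "S' \<equiv> snd (swp j k t (p, S))"
  shows "V p' S' j = {v \<in> V p S j. fst v \<le> t} \<union> {v \<in> V p S k. t \<le> fst v}"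
    and "V p' S' k = {v \<in> V p S k. fst v \<le> t} \<union> {v \<in> V p S j. t \<le> fst v}"
    and "x \<noteq> j \<Longrightarrow> x \<noteq> k \<Longrightarrow> V p' S' x = V p S x"
proof -
  have p'j: "p' j = p k" and p'k: "p' k = p j" and p'x: "\<And>x. x \<noteq> j \<Longrightarrow> x \<noteq> k \<Longrightarrow> p' x = p x"
    unfolding p'_def swp_def by (auto simp: Transposition.transpose_def)
  have S'j: "S' j = lo t (S j) \<union> hi t (S k)" and S'k: "S' k = lo t (S k) \<union> hi t (S j)"
    and S'x: "\<And>x. x \<noteq> j \<Longrightarrow> x \<noteq> k \<Longrightarrow> S' x = S x"
    unfolding S'_def swp_def using jk by auto
  from tj have tj': "A j \<le> t" "t \<le> B (p j) + 1" "h = Ht j (S j) t" by (auto simp: V_mem)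
  from tk have tk': "A k \<le> t" "t \<le> B (p k) + 1" "h = Ht k (S k) t" by (auto simp: V_mem)
  have eqjk: "Ht j (S j) t = Ht k (S k) t" using tj' tk' by simp
  show "V p' S' j = {v \<in> V p S j. fst v \<le> t} \<union> {v \<in> V p S k. t \<le> fst v}"
  proof (rule pair_set_eqI)
    fix u v
    show "(u, v) \<in> V p' S' j \<longleftrightarrow> (u, v) \<in> {v \<in> V p S j. fst v \<le> t} \<union> {v \<in> V p S k. t \<le> fst v}"
    proof (cases "u \<le> t")
      case True
      have "Ht j (S' j) u = Ht j (S j) u" unfolding S'j using True by (rule Ht_swap_le)
      moreover have "u = t \<Longrightarrow> Ht j (S j) u = Ht k (S k) u" using eqjk by simp
      ultimately show ?thesis using True tj' tk' by (auto simp: V_mem p'j)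
    next
      case False
      have "Ht j (S' j) u = Ht k (S k) u" unfolding S'j
        using Ht_swap_ge[OF fj fk _ eqjk] False by simp
      then show ?thesis using False tj' tk' by (auto simp: V_mem p'j)
    qed
  qed
  have eqkj: "Ht k (S k) t = Ht j (S j) t" using eqjk by simp
  show "V p' S' k = {v \<in> V p S k. fst v \<le> t} \<union> {v \<in> V p S j. t \<le> fst v}"
  proof (rule pair_set_eqI)
    fix u v
    show "(u, v) \<in> V p' S' k \<longleftrightarrow> (u, v) \<in> {v \<in> V p S k. fst v \<le> t} \<union> {v \<in> V p S j. t \<le> fst v}"
    proof (cases "u \<le> t")
      case True
      have "Ht k (S' k) u = Ht k (S k) u" unfolding S'k using True by (rule Ht_swap_le)
      moreover have "u = t \<Longrightarrow> Ht k (S k) u = Ht j (S j) u" using eqjk by simp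
      ultimately show ?thesis using True tj' tk' by (auto simp: V_mem p'k)
    next
      case False
      have "Ht k (S' k) u = Ht j (S j) u" unfolding S'k
        using Ht_swap_ge[OF fk fj _ eqkj] False by simp
      then show ?thesis using False tj' tk' by (auto simp: V_mem p'k)
    qed
  qed
  show "x \<noteq> j \<Longrightarrow> x \<noteq> k \<Longrightarrow> V p' S' x = V p S x"
    unfolding V_def using p'x S'x by simp
qed

end

lemma transpose_invol: "Transposition.transpose j k \<circ> Transposition.transpose j k = id"
  by (rule ext) (simp add: Transposition.transpose_def)

context lgv begin

abbreviation VV where "VV x \<equiv> V (fst x) (snd x)"

definition badj where "badj x j \<longleftrightarrow> j < n \<and> (\<exists>k<n. k \<noteq> j \<and> VV x j \<inter> VV x k \<noteq> {})"
definition J0 where "J0 x = (LEAST j. badj x j)"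
definition TS where "TS x = {t. \<exists>k<n. k \<noteq> J0 x \<and> (\<exists>h. (t, h) \<in> VV x (J0 x) \<inter> VV x k)}"
definition TT where "TT x = Min (TS x)"
definition kq where "kq x k \<longleftrightarrow> k < n \<and> k \<noteq> J0 x \<and> (\<exists>h. (TT x, h) \<in> VV x (J0 x) \<inter> VV x k)"
definition K0 where "K0 x = (LEAST k. kq x k)"
definition iota where "iota x = swp (J0 x) (K0 x) (TT x) x"

lemma bad_badj: "bad x \<longleftrightarrow> (\<exists>j. badj x j)"
  unfolding bad_def badj_def by blast

lemma J0_props:
  assumes "bad x"
  shows "badj x (J0 x)" "\<And>j. j < J0 x \<Longrightarrow> \<not> badj x j"
proof -
  obtain j where "badj x j" using assms bad_badj by blast
  then show "badj x (J0 x)" unfolding J0_def by (rule LeastI)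
  show "\<And>j. j < J0 x \<Longrightarrow> \<not> badj x j" unfolding J0_def by (rule not_less_Least)
qed

lemma TS_fin: "finite (TS x)"
proof (rule finite_subset)
  show "TS x \<subseteq> {A (J0 x)..B (fst x (J0 x)) + 1}"
    unfolding TS_def by (auto simp: V_mem)
qed simp

lemma TT_props:
  assumes "bad x"
  shows "TT x \<in> TS x" "\<And>t. t \<in> TS x \<Longrightarrow> TT x \<le> t"
proof -
  have "badj x (J0 x)" using J0_props assms by blast
  then obtain k w where k: "k < n" "k \<noteq> J0 x" and w: "w \<in> VV x (J0 x) \<inter> VV x k"
    unfolding badj_def by blast
  obtain t h where th: "w = (t, h)" by (cases w)
  have "t \<in> TS x" unfolding TS_def using k w th by blast
  then have ne: "TS x \<noteq> {}" by auto
  show "TT x \<in> TS x" unfolding TT_def using TS_fin ne by (rule Min_in)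
  show "\<And>t. t \<in> TS x \<Longrightarrow> TT x \<le> t" unfolding TT_def using TS_fin by (rule Min_le)
qed

lemma K0_props:
  assumes "bad x"
  shows "kq x (K0 x)" "J0 x < K0 x"
proof -
  have "TT x \<in> TS x" using TT_props assms by blast
  then obtain k h where "k < n" "k \<noteq> J0 x" "(TT x, h) \<in> VV x (J0 x) \<inter> VV x k"
    unfolding TS_def by auto
  then have "kq x k" unfolding kq_def by auto
  then show kk: "kq x (K0 x)" unfolding K0_def by (rule LeastI)
  then obtain h' where k0: "K0 x < n" "K0 x \<noteq> J0 x" "(TT x, h') \<in> VV x (J0 x) \<inter> VV x (K0 x)"
    unfolding kq_def by blast
  have j0: "J0 x < n" using J0_props(1)[OF assms] unfolding badj_def by blast
  have "VV x (K0 x) \<inter> VV x (J0 x) \<noteq> {}" using k0(3) by auto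
  then have "badj x (K0 x)" unfolding badj_def using k0(1,2) j0 by (intro conjI exI[of _ "J0 x"]) auto
  then have "\<not> K0 x < J0 x" using J0_props(2)[OF assms] by blast
  then show "J0 x < K0 x" using k0(2) by simp
qed

lemma Fam_D:
  assumes "x \<in> Fam"
  shows "fst x permutes {0..<n}" "snd x \<in> PiE {0..<n} (Cols (fst x))"
    "\<And>j. j < n \<Longrightarrow> snd x j \<subseteq> {A j..B (fst x j)}"
    "\<And>j. j < n \<Longrightarrow> int (card (snd x j)) = en (fst x j) - st j"
    "\<And>j. j < n \<Longrightarrow> finite (snd x j)"
proof -
  show p: "fst x permutes {0..<n}" using assms unfolding Fam_def by auto
  show S: "snd x \<in> PiE {0..<n} (Cols (fst x))" using assms unfolding Fam_def by auto
  fix j assume j: "j < n"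
  then have "snd x j \<in> Cols (fst x) j" using S by (auto simp: PiE_iff)
  then show "snd x j \<subseteq> {A j..B (fst x j)}" "int (card (snd x j)) = en (fst x j) - st j"
    unfolding Cols_def by auto
  then show "finite (snd x j)" using finite_subset by blast
qed

lemma swap_col:
  assumes X: "X \<subseteq> {A j..B (p j)}" "int (card X) = en (p j) - st j"
    and Y: "Y \<subseteq> {A k..B (p k)}" "int (card Y) = en (p k) - st k"
    and t: "A j \<le> t" "t \<le> B (p k) + 1" and eq: "Ht j X t = Ht k Y t"
  shows "lo t X \<union> hi t Y \<subseteq> {A j..B (p k)}"
    "int (card (lo t X \<union> hi t Y)) = en (p k) - st j"
proof -
  have fX: "finite X" using X(1) finite_subset by blast
  have fY: "finite Y" using Y(1) finite_subset by blast
  show "lo t X \<union> hi t Y \<subseteq> {A j..B (p k)}"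
  proof
    fix s assume "s \<in> lo t X \<union> hi t Y"
    then show "s \<in> {A j..B (p k)}"
    proof
      assume "s \<in> lo t X"
      then have "s \<in> X" "s < t" unfolding lo_def by auto
      then show ?thesis using X(1) t by auto
    next
      assume "s \<in> hi t Y"
      then have "s \<in> Y" "t \<le> s" unfolding hi_def by auto
      then show ?thesis using Y(1) t by auto
    qed
  qed
  have "card (lo t X \<union> hi t Y) = card (lo t X) + card (hi t Y)"
    by (rule card_Un_disjoint) (use fX fY lohi_disj in \<open>auto simp: lo_def hi_def\<close>)
  also have "\<dots> = rk X t + (card Y - rk Y t)" using card_lo card_hi[OF fY] by simp
  finally have c: "int (card (lo t X \<union> hi t Y)) = int (rk X t) + int (card Y) - int (rk Y t)"
    using rk_le_card[OF fY, of t] by simp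
  show "int (card (lo t X \<union> hi t Y)) = en (p k) - st j"
    using c eq Y(2) unfolding Ht_def by simp
qed

lemma wtc_split: "finite X \<Longrightarrow> wtc j X = (\<Prod>s\<in>lo t X. F s (Ht j X s)) * (\<Prod>s\<in>hi t X. F s (Ht j X s))"
proof -
  assume f: "finite X"
  have "wtc j X = (\<Prod>s\<in>lo t X \<union> hi t X. F s (Ht j X s))" unfolding wtc_def lohi_split ..
  also have "\<dots> = (\<Prod>s\<in>lo t X. F s (Ht j X s)) * (\<Prod>s\<in>hi t X. F s (Ht j X s))"
    by (rule prod.union_disjoint) (use f lohi_disj in \<open>auto simp: lo_def hi_def\<close>)
  finally show ?thesis .
qed

lemma wtc_swap:
  assumes fX: "finite X" and fY: "finite Y" and eq: "Ht j X t = Ht k Y t"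
  shows "wtc j (lo t X \<union> hi t Y) = (\<Prod>s\<in>lo t X. F s (Ht j X s)) * (\<Prod>s\<in>hi t Y. F s (Ht k Y s))"
proof -
  let ?Z = "lo t X \<union> hi t Y"
  have "wtc j ?Z = (\<Prod>s\<in>lo t X. F s (Ht j ?Z s)) * (\<Prod>s\<in>hi t Y. F s (Ht j ?Z s))"
    unfolding wtc_def
    by (rule prod.union_disjoint) (use fX fY lohi_disj in \<open>auto simp: lo_def hi_def\<close>)
  also have "(\<Prod>s\<in>lo t X. F s (Ht j ?Z s)) = (\<Prod>s\<in>lo t X. F s (Ht j X s))"
  proof (rule prod.cong[OF refl])
    fix s assume "s \<in> lo t X"
    then have "s \<le> t" by (simp add: lo_def)
    then show "F s (Ht j ?Z s) = F s (Ht j X s)" using Ht_swap_le by simp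
  qed
  also have "(\<Prod>s\<in>hi t Y. F s (Ht j ?Z s)) = (\<Prod>s\<in>hi t Y. F s (Ht k Y s))"
  proof (rule prod.cong[OF refl])
    fix s assume "s \<in> hi t Y"
    then have "t \<le> s" by (simp add: hi_def)
    then show "F s (Ht j ?Z s) = F s (Ht k Y s)" using Ht_swap_ge[OF fX fY _ eq] by simp
  qed
  finally show ?thesis .
qed

end

context lgv begin

lemma iota_main:
  assumes x: "x \<in> Fam" and bx: "bad x"
  shows "iota x \<in> Fam" "bad (iota x)" "iota (iota x) = x" "iota x \<noteq> x" "fw (iota x) = - fw x"
proof -
  define j where "j = J0 x"
  define k where "k = K0 x"
  define t where "t = TT x"
  obtain p S where xps: "x = (p, S)" by (cases x)
  have VVx: "VV x = V p S" using xps by simp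
  have pperm: "p permutes {0..<n}" using Fam_D(1)[OF x] xps by simp
  have jn: "j < n" using J0_props(1)[OF bx] unfolding j_def badj_def by blast
  have jmin: "\<And>m. m < j \<Longrightarrow> \<not> badj x m" using J0_props(2)[OF bx] unfolding j_def by blast
  have kqx: "kq x k" using K0_props(1)[OF bx] unfolding k_def .
  have jk: "j < k" using K0_props(2)[OF bx] unfolding j_def k_def .
  obtain h where kn: "k < n" and hj: "(t, h) \<in> V p S j" and hk: "(t, h) \<in> V p S k"
    using kqx unfolding kq_def j_def t_def xps by auto
  have jk': "j \<noteq> k" using jk by simp
  have fj: "finite (S j)" using Fam_D(5)[OF x jn] xps by simp
  have fk: "finite (S k)" using Fam_D(5)[OF x kn] xps by simp
  have Sj: "S j \<subseteq> {A j..B (p j)}" "int (card (S j)) = en (p j) - st j"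
    using Fam_D(3,4)[OF x jn] xps by auto
  have Sk: "S k \<subseteq> {A k..B (p k)}" "int (card (S k)) = en (p k) - st k"
    using Fam_D(3,4)[OF x kn] xps by auto
  from hj have tj: "A j \<le> t" "t \<le> B (p j) + 1" "h = Ht j (S j) t" by (auto simp: V_mem)
  from hk have tk: "A k \<le> t" "t \<le> B (p k) + 1" "h = Ht k (S k) t" by (auto simp: V_mem)
  have eqjk: "Ht j (S j) t = Ht k (S k) t" using tj tk by simp
  have eqkj: "Ht k (S k) t = Ht j (S j) t" using tj tk by simp
  define x' where "x' = swp j k t x"
  have ix: "iota x = x'" unfolding iota_def x'_def j_def k_def t_def ..
  define p' where "p' = fst x'"
  define S' where "S' = snd x'"
  have x'ps: "x' = (p', S')" unfolding p'_def S'_def by simp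
  have p'def: "p' = p \<circ> Transposition.transpose j k" unfolding p'_def x'_def swp_def xps by simp
  have S'def: "S' = S(j := lo t (S j) \<union> hi t (S k), k := lo t (S k) \<union> hi t (S j))"
    unfolding S'_def x'_def swp_def xps by simp
  have p'j: "p' j = p k" and p'k: "p' k = p j" and p'm: "\<And>m. m \<noteq> j \<Longrightarrow> m \<noteq> k \<Longrightarrow> p' m = p m"
    unfolding p'def by (auto simp: Transposition.transpose_def)
  have VS: "V p' S' j = {v \<in> V p S j. fst v \<le> t} \<union> {v \<in> V p S k. t \<le> fst v}"
       "V p' S' k = {v \<in> V p S k. fst v \<le> t} \<union> {v \<in> V p S j. t \<le> fst v}"
       "\<And>m. m \<noteq> j \<Longrightarrow> m \<noteq> k \<Longrightarrow> V p' S' m = V p S m"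
    using swp_V[OF fj fk jk' hj hk] unfolding p'_def S'_def x'_def xps by auto
  have Vsub: "\<And>m. V p' S' m \<subseteq> V p S m \<union> V p S j \<union> V p S k"
  proof -
    fix m show "V p' S' m \<subseteq> V p S m \<union> V p S j \<union> V p S k"
      by (cases "m = j"; cases "m = k") (use VS in auto)
  qed
  have p'perm: "p' permutes {0..<n}" unfolding p'def
    using permutes_compose[OF permutes_swap_id[of j "{0..<n}" k] pperm] jn kn by simp
  have S'Pi: "S' \<in> PiE {0..<n} (Cols p')"
  proof -
    have ext: "S \<in> extensional {0..<n}" using Fam_D(2)[OF x] xps by (simp add: PiE_iff)
    have "S' \<in> extensional {0..<n}" unfolding S'def using ext jn kn
      by (auto simp: extensional_def)
    moreover have "\<forall>i\<in>{0..<n}. S' i \<in> Cols p' i"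
    proof
      fix i assume i: "i \<in> {0..<n}"
      show "S' i \<in> Cols p' i"
      proof (cases "i = j")
        case True
        have "S' j = lo t (S j) \<union> hi t (S k)" unfolding S'def using jk' by simp
        then show ?thesis unfolding True Cols_def p'j
          using swap_col[OF Sj Sk tj(1) tk(2) eqjk] by simp
      next
        case False
        show ?thesis
        proof (cases "i = k")
          case True
          have "S' k = lo t (S k) \<union> hi t (S j)" unfolding S'def by simp
          then show ?thesis unfolding True Cols_def p'k
            using swap_col[OF Sk Sj tk(1) tj(2) eqkj] by simp
        next
          case False
          have "S' i = S i" unfolding S'def using \<open>i \<noteq> j\<close> False by simp
          moreover have "S i \<in> Cols p i" using Fam_D(2)[OF x] xps i by (auto simp: PiE_iff)
          ultimately show ?thesis unfolding Cols_def using p'm[OF \<open>i \<noteq> j\<close> False] by simp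
        qed
      qed
    qed
    ultimately show ?thesis by (simp add: PiE_iff)
  qed
  have x'F: "x' \<in> Fam" unfolding x'ps Fam_def using p'perm S'Pi by simp
  then show "iota x \<in> Fam" unfolding ix .
  have htj': "(t, h) \<in> V p' S' j" unfolding VS using hj by simp
  have htk': "(t, h) \<in> V p' S' k" unfolding VS using hk by simp
  have badj': "badj x' j" unfolding badj_def x'ps using jn kn jk' htj' htk'
    by (intro conjI exI[of _ k]) auto
  then have bx': "bad x'" unfolding bad_badj by blast
  then show "bad (iota x)" unfolding ix .
  have J0': "J0 x' = j"
    unfolding J0_def
  proof (rule Least_equality)
    show "badj x' j" by (rule badj')
    fix m assume bm: "badj x' m"
    show "j \<le> m"
    proof (rule ccontr)
      assume "\<not> j \<le> m"
      then have mj: "m < j" by simp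
      then have mj': "m \<noteq> j" "m \<noteq> k" using jk by auto
      from bm obtain q w where q: "q < n" "q \<noteq> m" and w: "w \<in> V p' S' m" "w \<in> V p' S' q"
        unfolding badj_def x'ps by auto
      have wm: "w \<in> V p S m" using w(1) VS(3)[OF mj'] by simp
      have "w \<in> V p S q \<or> w \<in> V p S j \<or> w \<in> V p S k" using w(2) Vsub[of q] by auto
      then have "badj x m"
      proof (elim disjE)
        assume "w \<in> V p S q" then show "badj x m" unfolding badj_def xps using q wm mj jn
          by (intro conjI exI[of _ q]) auto
      next
        assume "w \<in> V p S j" then show "badj x m" unfolding badj_def xps using wm mj jn mj'
          by (intro conjI exI[of _ j]) auto
      next
        assume "w \<in> V p S k" then show "badj x m" unfolding badj_def xps using wm mj jn kn mj'
          by (intro conjI exI[of _ k]) auto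
      qed
      then show False using jmin mj by blast
    qed
  qed
  have J0'': "J0 (p', S') = j" using J0' x'ps by simp
  have TT': "TT x' = t"
    unfolding TT_def
  proof (rule Min_eqI[OF TS_fin])
    show "t \<in> TS x'" unfolding TS_def x'ps J0'' using kn jk' htj' htk' by auto
    fix s assume "s \<in> TS x'"
    then obtain q h' where q: "q < n" "q \<noteq> j" and sj: "(s, h') \<in> V p' S' j" and sq: "(s, h') \<in> V p' S' q"
      unfolding TS_def x'ps J0'' by auto
    show "t \<le> s"
    proof (rule ccontr)
      assume "\<not> t \<le> s"
      then have st: "s < t" by simp
      have sj0: "(s, h') \<in> V p S j" using sj st VS(1) by auto
      have "\<exists>q'. q' < n \<and> q' \<noteq> j \<and> (s, h') \<in> V p S q'"
      proof (cases "q = k")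
        case True
        then have "(s, h') \<in> V p S k" using sq st VS(2) by auto
        then show ?thesis using kn jk' by blast
      next
        case False
        then have "(s, h') \<in> V p S q" using sq VS(3)[OF q(2) False] by simp
        then show ?thesis using q by blast
      qed
      then have "s \<in> TS x" unfolding TS_def VVx j_def[symmetric] using sj0 by auto
      then have "t \<le> s" using TT_props(2)[OF bx] unfolding t_def by blast
      then show False using st by simp
    qed
  qed
  have TT'': "TT (p', S') = t" using TT' x'ps by simp
  have J0x: "J0 (p, S) = j" "TT (p, S) = t" using xps unfolding j_def t_def by simp_all
  have K0': "K0 x' = k"
  proof -
    have vj: "\<And>h'. (t, h') \<in> V p' S' j \<longleftrightarrow> (t, h') \<in> V p S j"
    proof -
      fix h'
      have "(t, h') \<in> V p S k \<longleftrightarrow> (t, h') \<in> V p S j" using tj tk by (auto simp: V_mem)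
      then show "(t, h') \<in> V p' S' j \<longleftrightarrow> (t, h') \<in> V p S j" unfolding VS by auto
    qed
    have "kq x' = kq x"
    proof (rule ext)
      fix m
      show "kq x' m = kq x m"
      proof (cases "m = k")
        case True
        have "kq x' k" unfolding kq_def x'ps J0'' TT'' using kn jk' htj' htk' by auto
        then show ?thesis using True kqx by simp
      next
        case False
        show ?thesis
        proof (cases "m = j")
          case True
          then show ?thesis unfolding kq_def x'ps xps J0'' J0x by simp
        next
          case mj: False
          have "V p' S' m = V p S m" using VS(3)[OF mj False] .
          then show ?thesis unfolding kq_def x'ps xps J0'' TT'' J0x using vj by auto
        qed
      qed
    qed
    then show ?thesis unfolding K0_def k_def by simp
  qed
  have "iota x' = swp j k t x'" unfolding iota_def J0' K0' TT' ..
  also have "\<dots> = x"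
  proof -
    have "fst (swp j k t x') = p"
      unfolding swp_def x'ps p'def by (simp add: o_assoc[symmetric] transpose_invol)
    moreover have "snd (swp j k t x') = S"
    proof -
      have a: "lo t (S' j) \<union> hi t (S' k) = S j"
        unfolding S'def using jk' by (simp add: lo_lohi hi_lohi lohi_split)
      have b: "lo t (S' k) \<union> hi t (S' j) = S k"
        unfolding S'def using jk' by (simp add: lo_lohi hi_lohi lohi_split)
      show ?thesis unfolding swp_def x'ps snd_conv a b unfolding S'def by (rule ext) simp
    qed
    ultimately show ?thesis unfolding xps by (metis prod.collapse)
  qed
  finally show "iota (iota x) = x" unfolding ix .
  have "p' j \<noteq> p j"
  proof -
    have "inj p" using pperm by (rule permutes_inj)
    then show ?thesis unfolding p'j using jk' by (auto dest: injD)
  qed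
  then have "x' \<noteq> x" unfolding x'ps xps by auto
  then show "iota x \<noteq> x" unfolding ix .
  have sgn: "(of_int (sign p') :: 'a) = - of_int (sign p)"
  proof -
    have "(of_int (sign p') :: 'a) = of_int (sign p) * of_int (sign (Transposition.transpose j k))"
      unfolding p'def by (rule signof_compose[OF pperm permutes_swap_id]) (use jn kn in auto)
    then show ?thesis using jk' by (simp add: sign_swap_id)
  qed
  have prodeq: "(\<Prod>i<n. wtc i (S' i)) = (\<Prod>i<n. wtc i (S i))"
  proof (rule prod_two_eq[of "{..<n}" j k])
    show "finite {..<n}" "j \<in> {..<n}" "k \<in> {..<n}" "j \<noteq> k" using jn kn jk' by auto
    show "\<And>i. i \<in> {..<n} \<Longrightarrow> i \<noteq> j \<Longrightarrow> i \<noteq> k \<Longrightarrow> wtc i (S' i) = wtc i (S i)"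
      unfolding S'def by simp
    have w1: "wtc j (S' j) = (\<Prod>s\<in>lo t (S j). F s (Ht j (S j) s)) * (\<Prod>s\<in>hi t (S k). F s (Ht k (S k) s))"
      unfolding S'def using jk' wtc_swap[OF fj fk eqjk] by simp
    have w2: "wtc k (S' k) = (\<Prod>s\<in>lo t (S k). F s (Ht k (S k) s)) * (\<Prod>s\<in>hi t (S j). F s (Ht j (S j) s))"
      unfolding S'def using wtc_swap[OF fk fj eqkj] by simp
    have w3: "wtc j (S j) = (\<Prod>s\<in>lo t (S j). F s (Ht j (S j) s)) * (\<Prod>s\<in>hi t (S j). F s (Ht j (S j) s))"
      using wtc_split[OF fj] .
    have w4: "wtc k (S k) = (\<Prod>s\<in>lo t (S k). F s (Ht k (S k) s)) * (\<Prod>s\<in>hi t (S k). F s (Ht k (S k) s))"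
      using wtc_split[OF fk] .
    show "wtc j (S' j) * wtc k (S' k) = wtc j (S j) * wtc k (S k)"
      unfolding w1 w2 w3 w4 by (simp add: ac_simps)
  qed
  have "fw x' = - fw x" unfolding fw_def x'ps xps fst_conv snd_conv sgn prodeq by simp
  then show "fw (iota x) = - fw x" unfolding ix .
qed

lemma finite_Fam: "finite Fam"
proof -
  have sub: "\<And>p j. Cols p j \<subseteq> Pow {A j..B (p j)}" unfolding Cols_def by auto
  have "\<And>p j. finite (Cols p j)"
    by (rule finite_subset[OF sub]) simp
  then show ?thesis unfolding Fam_def
    by (intro finite_SigmaI finite_PiE finite_permutations) auto
qed

theorem lgv_cancel: "(\<Sum>x\<in>Fam. fw x) = (\<Sum>x\<in>{x\<in>Fam. \<not> bad x}. fw x)"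
proof -
  have split: "Fam = {x\<in>Fam. bad x} \<union> {x\<in>Fam. \<not> bad x}" by auto
  have "(\<Sum>x\<in>Fam. fw x) = (\<Sum>x\<in>{x\<in>Fam. bad x}. fw x) + (\<Sum>x\<in>{x\<in>Fam. \<not> bad x}. fw x)"
    by (subst split, rule sum.union_disjoint) (use finite_Fam in auto)
  moreover have "(\<Sum>x\<in>{x\<in>Fam. bad x}. fw x) = 0"
  proof (rule sum_involution_eq_0[where h = iota])
    fix x assume "x \<in> {x\<in>Fam. bad x}"
    then have x: "x \<in> Fam" "bad x" by auto
    show "fw (iota x) + fw x = 0" using iota_main(5)[OF x] by simp
    show "iota x \<in> {x\<in>Fam. bad x}" using iota_main(1,2)[OF x] by simp
    show "iota (iota x) = x" using iota_main(3)[OF x] .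
    show "iota x \<noteq> x" using iota_main(4)[OF x] .
  qed
  ultimately show ?thesis by simp
qed

end

lemma rk_zero_below: "P \<subseteq> {a..b} \<Longrightarrow> t \<le> a \<Longrightarrow> rk P t = 0"
proof -
  assume "P \<subseteq> {a..b}" "t \<le> a"
  then have e: "{x \<in> P. x < t} = {}" by auto
  show ?thesis unfolding rk_def e by simp
qed

lemma rk_full_above: "P \<subseteq> {a..b} \<Longrightarrow> b < t \<Longrightarrow> rk P t = card P"
proof -
  assume "P \<subseteq> {a..b}" "b < t"
  then have e: "{x \<in> P. x < t} = P" by auto
  show ?thesis unfolding rk_def e by simp
qed

lemma rk_le_dist: "P \<subseteq> {a..b} \<Longrightarrow> int (rk P t) \<le> max 0 (t - a)"
proof -
  assume P: "P \<subseteq> {a..b}"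
  have "{x \<in> P. x < t} \<subseteq> {a..t-1}" using P by auto
  then have "card {x \<in> P. x < t} \<le> card {a..t-1}" by (intro card_mono) auto
  then show ?thesis unfolding rk_def by simp
qed

lemma rk_ge_dist: "P \<subseteq> {a..b} \<Longrightarrow> int (card P) - int (rk P t) \<le> max 0 (b + 1 - t)"
proof -
  assume P: "P \<subseteq> {a..b}"
  have fP: "finite P" using P finite_subset by blast
  have "card (hi t P) \<le> card {t..b}" using P unfolding hi_def by (intro card_mono) auto
  then show ?thesis using card_hi[OF fP, of t] rk_le_card[OF fP, of t] by simp
qed

lemma ivt_int:
  fixes g :: "int \<Rightarrow> int"
  assumes step: "\<And>t. \<bar>g (t + 1) - g t\<bar> \<le> 1" and uv: "u \<le> v" and gu: "g u > 0" and gv: "g v \<le> 0"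
  shows "\<exists>t. u \<le> t \<and> t \<le> v \<and> g t = 0"
proof -
  let ?M = "{t \<in> {u..v}. g t \<le> 0}"
  have fin: "finite ?M" by (rule finite_subset[of _ "{u..v}"]) auto
  have ne: "?M \<noteq> {}" using uv gv by auto
  define m where "m = Min ?M"
  have mM: "m \<in> ?M" unfolding m_def using fin ne by (rule Min_in)
  have mmin: "\<And>s. s \<in> ?M \<Longrightarrow> m \<le> s" unfolding m_def using fin by (rule Min_le)
  have "m \<noteq> u" using mM gu by auto
  then have mu: "u \<le> m - 1" using mM by auto
  have "g (m - 1) > 0"
  proof (rule ccontr)
    assume "\<not> g (m - 1) > 0"
    then have "m - 1 \<in> ?M" using mu mM by auto
    then show False using mmin by fastforce
  qed
  moreover have "\<bar>g (m - 1 + 1) - g (m - 1)\<bar> \<le> 1" by (rule step)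
  ultimately have "g m = 0" using mM by auto
  then show ?thesis using mM by auto
qed

context
  fixes P Q :: "int set" and a1 b1 a2 b2 d1 d2 :: int
  assumes P: "P \<subseteq> {a1..b1}" and Q: "Q \<subseteq> {a2..b2}"
begin

private lemma fP: "finite P" using P finite_subset by blast
private lemma fQ: "finite Q" using Q finite_subset by blast

lemma start_region:
  assumes d: "d2 < d1" and a: "a1 - d1 \<le> a2 - d2" and t: "t < a1 \<or> t < a2"
  shows "d2 + int (rk Q t) < d1 + int (rk P t)"
proof (cases "t < a2")
  case True
  then have "rk Q t = 0" using rk_zero_below[OF Q] by simp
  then show ?thesis using d by simp
next
  case False
  then have ta1: "t < a1" using t by simp
  then have "rk P t = 0" using rk_zero_below[OF P] by simp
  moreover have "int (rk Q t) \<le> max 0 (t - a2)" by (rule rk_le_dist[OF Q])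
  ultimately show ?thesis using d a ta1 False by simp
qed

lemma end_region:
  assumes D: "d2 + int (card Q) < d1 + int (card P)"
    and b: "b1 - (d1 + int (card P)) \<le> b2 - (d2 + int (card Q))"
    and t: "b1 + 1 < t \<or> b2 + 1 < t"
  shows "d2 + int (rk Q t) < d1 + int (rk P t)"
proof (cases "b1 + 1 < t")
  case True
  then have "rk P t = card P" using rk_full_above[OF P] by simp
  moreover have "rk Q t \<le> card Q" by (rule rk_le_card[OF fQ])
  ultimately show ?thesis using D by simp
next
  case False
  then have tb2: "b2 + 1 < t" using t by simp
  then have "rk Q t = card Q" using rk_full_above[OF Q] by simp
  moreover have "int (card P) - int (rk P t) \<le> max 0 (b1 + 1 - t)" by (rule rk_ge_dist[OF P])
  ultimately show ?thesis using D b tb2 False by simp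
qed

lemma step_bound: "\<bar>(d1 + int (rk P (t + 1)) - (d2 + int (rk Q (t + 1)))) - (d1 + int (rk P t) - (d2 + int (rk Q t)))\<bar> \<le> 1"
  using rk_Suc[OF fP, of t] rk_Suc[OF fQ, of t] by auto

end

lemma meet_cross:
  assumes P: "P \<subseteq> {a1..b1}" and Q: "Q \<subseteq> {a2..b2}"
    and d: "d2 < d1" and a: "a1 - d1 \<le> a2 - d2"
    and D: "d1 + int (card P) < d2 + int (card Q)"
    and b: "b2 - (d2 + int (card Q)) \<le> b1 - (d1 + int (card P))"
  shows "\<exists>t. a1 \<le> t \<and> t \<le> b1 + 1 \<and> a2 \<le> t \<and> t \<le> b2 + 1 \<and> d1 + int (rk P t) = d2 + int (rk Q t)"
proof -
  define g where "g t = d1 + int (rk P t) - (d2 + int (rk Q t))" for t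
  have step: "\<And>t. \<bar>g (t + 1) - g t\<bar> \<le> 1" unfolding g_def using step_bound[OF P Q] by blast
  have S: "\<And>t. t < a1 \<or> t < a2 \<Longrightarrow> g t > 0" unfolding g_def using start_region[OF P Q d a] by fastforce
  have E: "\<And>t. b1 + 1 < t \<or> b2 + 1 < t \<Longrightarrow> g t < 0" unfolding g_def using end_region[OF Q P D b] by fastforce
  define u where "u = min a1 a2 - 1"
  define v where "v = max b1 b2 + 2"
  have gu: "g u > 0" unfolding u_def by (rule S) linarith
  have gv: "g v < 0" unfolding v_def by (rule E) linarith
  have uv: "u \<le> v"
  proof (rule ccontr)
    assume "\<not> u \<le> v"
    then have "v < a1 \<or> v < a2" unfolding u_def by auto
    then show False using S gv by fastforce
  qed
  obtain t where t: "u \<le> t" "t \<le> v" "g t = 0" using ivt_int[OF step uv gu] gv by fastforce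
  have "\<not> (t < a1 \<or> t < a2)" using S t(3) by fastforce
  moreover have "\<not> (b1 + 1 < t \<or> b2 + 1 < t)" using E t(3) by fastforce
  ultimately have "a1 \<le> t \<and> t \<le> b1 + 1 \<and> a2 \<le> t \<and> t \<le> b2 + 1 \<and> d1 + int (rk P t) = d2 + int (rk Q t)"
    using t(3) unfolding g_def by auto
  then show ?thesis by blast
qed

lemma meet_touch:
  assumes P: "P \<subseteq> {a1..b1}" and Q: "Q \<subseteq> {a2..b2}"
    and d: "d2 < d1" and a: "a1 - d1 \<le> a2 - d2"
    and D: "d2 + int (card Q) < d1 + int (card P)"
    and b: "b1 - (d1 + int (card P)) \<le> b2 - (d2 + int (card Q))"
    and t0: "d1 + int (rk P t0) \<le> d2 + int (rk Q t0)"
  shows "\<exists>t. a1 \<le> t \<and> t \<le> b1 + 1 \<and> a2 \<le> t \<and> t \<le> b2 + 1 \<and> d1 + int (rk P t) = d2 + int (rk Q t)"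
proof -
  define g where "g t = d1 + int (rk P t) - (d2 + int (rk Q t))" for t
  have step: "\<And>t. \<bar>g (t + 1) - g t\<bar> \<le> 1" unfolding g_def using step_bound[OF P Q] by blast
  have S: "\<And>t. t < a1 \<or> t < a2 \<Longrightarrow> g t > 0" unfolding g_def using start_region[OF P Q d a] by fastforce
  have E: "\<And>t. b1 + 1 < t \<or> b2 + 1 < t \<Longrightarrow> g t > 0" unfolding g_def using end_region[OF P Q D b] by fastforce
  define u where "u = min a1 a2 - 1"
  have gu: "g u > 0" unfolding u_def by (rule S) linarith
  have gv: "g t0 \<le> 0" using t0 unfolding g_def by simp
  have uv: "u \<le> t0"
  proof (rule ccontr)
    assume "\<not> u \<le> t0"
    then have "t0 < a1 \<or> t0 < a2" unfolding u_def by auto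
    then show False using S gv by fastforce
  qed
  obtain t where t: "u \<le> t" "t \<le> t0" "g t = 0" using ivt_int[OF step uv gu gv] by blast
  have "\<not> (t < a1 \<or> t < a2)" using S t(3) by fastforce
  moreover have "\<not> (b1 + 1 < t \<or> b2 + 1 < t)" using E t(3) by fastforce
  ultimately have "a1 \<le> t \<and> t \<le> b1 + 1 \<and> a2 \<le> t \<and> t \<le> b2 + 1 \<and> d1 + int (rk P t) = d2 + int (rk Q t)"
    using t(3) unfolding g_def by auto
  then show ?thesis by blast
qed

locale lgv2 = lgv +
  assumes st_dec: "\<And>j. st (Suc j) < st j"
    and en_dec: "\<And>j. en (Suc j) < en j"
    and flags: "\<And>j. Suc j < n \<Longrightarrow> st j \<le> en (Suc j) \<Longrightarrow>
        A j - st j \<le> A (Suc j) - st (Suc j) \<and> B j - en j \<le> B (Suc j) - en (Suc j)"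
begin

lemma st_anti: "i \<le> j \<Longrightarrow> st j \<le> st i"
proof (induction j rule: dec_induct)
  case (step m) then show ?case using st_dec[of m] by simp
qed simp

lemma en_anti: "i \<le> j \<Longrightarrow> en j \<le> en i"
proof (induction j rule: dec_induct)
  case (step m) then show ?case using en_dec[of m] by simp
qed simp

lemma en_strict: "i < j \<Longrightarrow> en j < en i"
  using en_anti[of "Suc i" j] en_dec[of i] by simp

lemma cut_perm:
  assumes x: "(p, S) \<in> Fam" and cut: "en (Suc m) < st m"
  shows "\<And>x. x \<le> m \<Longrightarrow> p x \<le> m" and "\<And>y. m < y \<Longrightarrow> m < p y"
proof -
  have pp: "p permutes {0..<n}" using Fam_D(1)[OF x] by simp
  show low: "\<And>x. x \<le> m \<Longrightarrow> p x \<le> m"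
  proof -
    fix x assume xm: "x \<le> m"
    show "p x \<le> m"
    proof (cases "x < n")
      case False
      then have "p x = x" using pp by (auto intro: permutes_not_in)
      then show ?thesis using xm by simp
    next
      case True
      have "int (card (S x)) = en (p x) - st x" using Fam_D(4)[OF x True] by simp
      then have "st x \<le> en (p x)" by linarith
      moreover have "st m \<le> st x" using st_anti[OF xm] .
      ultimately have "en (Suc m) < en (p x)" using cut by simp
      then show ?thesis using en_anti[of "Suc m" "p x"] by (cases "Suc m \<le> p x") auto
    qed
  qed
  show "\<And>y. m < y \<Longrightarrow> m < p y"
  proof -
    fix y assume ym: "m < y"
    show "m < p y"
    proof (rule ccontr)
      assume "\<not> m < p y"
      then have pym: "p y \<in> {0..m}" by simp
      have inj: "inj p" using pp by (rule permutes_inj)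
      have "p ` {0..m} = {0..m}"
        by (rule endo_inj_surj) (use low inj in \<open>auto intro: inj_on_subset\<close>)
      then obtain x where "x \<in> {0..m}" "p x = p y" using pym by (metis imageE)
      then have "x = y" using inj by (auto dest: injD)
      then show False using \<open>x \<in> {0..m}\<close> ym by simp
    qed
  qed
qed

lemma meet_bad:
  assumes "j < n" "k < n" "j \<noteq> k" "A j \<le> t" "t \<le> B (p j) + 1" "A k \<le> t" "t \<le> B (p k) + 1"
    "Ht j (S j) t = Ht k (S k) t"
  shows "bad (p, S)"
proof -
  have "(t, Ht j (S j) t) \<in> V p S j" "(t, Ht j (S j) t) \<in> V p S k" using assms by (auto simp: V_mem)
  then have "V p S j \<inter> V p S k \<noteq> {}" by auto
  then show ?thesis unfolding bad_def using assms(1-3) by auto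
qed

lemma B_chain:
  assumes "i \<le> i'" "i' < n" "\<And>m. i \<le> m \<Longrightarrow> m < i' \<Longrightarrow> st m \<le> en (Suc m)"
  shows "B i - en i \<le> B i' - en i'"
  using assms
proof (induction i' rule: dec_induct)
  case base then show ?case by simp
next
  case (step m)
  have "B m - en m \<le> B (Suc m) - en (Suc m)" using flags[of m] step.prems step.hyps by auto
  then show ?case using step by auto
qed

lemma good_mono:
  assumes x: "(p, S) \<in> Fam" and g: "\<not> bad (p, S)" and j: "Suc j < n"
  shows "p j < p (Suc j)"
proof (cases "en (Suc j) < st j")
  case True
  then show ?thesis using cut_perm[OF x True, of j] cut_perm[OF x True, of "Suc j"] by fastforce
next
  case False
  then have conn: "st j \<le> en (Suc j)" by simp
  have pp: "p permutes {0..<n}" using Fam_D(1)[OF x] by simp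
  have inj: "inj p" using pp by (rule permutes_inj)
  show ?thesis
  proof (rule ccontr)
    assume "\<not> p j < p (Suc j)"
    moreover have "p j \<noteq> p (Suc j)" using inj by (auto dest: injD)
    ultimately have ii: "p (Suc j) < p j" by simp
    define i where "i = p (Suc j)"
    define i' where "i' = p j"
    have jn: "j < n" using j by simp
    have i'n: "i' < n" unfolding i'_def using pp jn by (auto dest: permutes_in_image)
    have nocut: "\<And>m. i \<le> m \<Longrightarrow> m < i' \<Longrightarrow> st m \<le> en (Suc m)"
    proof (rule ccontr)
      fix m assume m: "i \<le> m" "m < i'" "\<not> st m \<le> en (Suc m)"
      then have c: "en (Suc m) < st m" by simp
      have "\<not> m < p (Suc j)" using m(1) unfolding i_def by simp
      then have "\<not> m < Suc j" using cut_perm(2)[OF x c] by blast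
      moreover have "\<not> p j \<le> m" using m(2) unfolding i'_def by simp
      then have "\<not> j \<le> m" using cut_perm(1)[OF x c] by blast
      ultimately show False by simp
    qed
    have chain: "B i - en i \<le> B i' - en i'"
      using B_chain[OF _ i'n nocut] ii unfolding i_def i'_def by simp
    have fl: "A j - st j \<le> A (Suc j) - st (Suc j)" using flags[OF j conn] by simp
    have Pj: "S j \<subseteq> {A j..B i'}" "int (card (S j)) = en i' - st j"
      using Fam_D(3,4)[OF x jn] unfolding i'_def by auto
    have Qj: "S (Suc j) \<subseteq> {A (Suc j)..B i}" "int (card (S (Suc j))) = en i - st (Suc j)"
      using Fam_D(3,4)[OF x j] unfolding i_def by auto
    have enii: "en i' < en i" using en_strict ii unfolding i_def i'_def by simp
    obtain t where t: "A j \<le> t" "t \<le> B i' + 1" "A (Suc j) \<le> t" "t \<le> B i + 1"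
        "st j + int (rk (S j) t) = st (Suc j) + int (rk (S (Suc j)) t)"
      using meet_cross[OF Pj(1) Qj(1) st_dec[of j] fl] Pj(2) Qj(2) enii chain by auto
    have "bad (p, S)"
      by (rule meet_bad[of j "Suc j" t p]) (use t jn j in \<open>auto simp: Ht_def i_def i'_def\<close>)
    then show False using g by simp
  qed
qed

lemma strict_mono_perm_id:
  assumes pp: "p permutes {0..<n}" and mono: "\<And>j. Suc j < n \<Longrightarrow> p j < p (Suc j)"
  shows "p = id"
proof -
  have le: "\<And>x. x < n \<Longrightarrow> x \<le> p x"
  proof -
    fix x show "x < n \<Longrightarrow> x \<le> p x"
    proof (induction x)
      case (Suc x) then show ?case using mono[of x] by simp
    qed simp
  qed
  have ge: "\<And>k. k < n \<Longrightarrow> p (n - 1 - k) \<le> n - 1 - k"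
  proof -
    fix k show "k < n \<Longrightarrow> p (n - 1 - k) \<le> n - 1 - k"
    proof (induction k)
      case 0
      have "p (n - 1) \<in> {0..<n}" using pp 0 by (auto dest: permutes_in_image)
      then show ?case by simp
    next
      case (Suc k)
      have "Suc (n - 1 - Suc k) = n - 1 - k" using Suc.prems by simp
      then have "p (n - 1 - Suc k) < p (n - 1 - k)" using mono[of "n - 1 - Suc k"] Suc.prems by simp
      then show ?case using Suc by simp
    qed
  qed
  show ?thesis
  proof (rule ext)
    fix x show "p x = id x"
    proof (cases "x < n")
      case True
      have "p x \<le> x" using ge[of "n - 1 - x"] True by simp
      then show ?thesis using le[OF True] by simp
    next
      case False
      then show ?thesis using pp by (auto intro: permutes_not_in)
    qed
  qed
qed

lemma good_id: "(p, S) \<in> Fam \<Longrightarrow> \<not> bad (p, S) \<Longrightarrow> p = id"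
  using strict_mono_perm_id[of p] good_mono[of p S] Fam_D(1)[of "(p, S)"] by simp

lemma good_adj:
  assumes x: "(id, S) \<in> Fam" and g: "\<not> bad (id, S)" and j: "Suc j < n"
  shows "Ht (Suc j) (S (Suc j)) t < Ht j (S j) t"
proof -
  have jn: "j < n" using j by simp
  have Pj: "S j \<subseteq> {A j..B j}" "int (card (S j)) = en j - st j"
    using Fam_D(3,4)[OF x jn] by auto
  have Qj: "S (Suc j) \<subseteq> {A (Suc j)..B (Suc j)}" "int (card (S (Suc j))) = en (Suc j) - st (Suc j)"
    using Fam_D(3,4)[OF x j] by auto
  show ?thesis
  proof (cases "en (Suc j) < st j")
    case True
    have "rk (S (Suc j)) t \<le> card (S (Suc j))" by (rule rk_le_card) (use Qj finite_subset in blast)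
    then have "Ht (Suc j) (S (Suc j)) t \<le> en (Suc j)" unfolding Ht_def using Qj(2) by simp
    moreover have "st j \<le> Ht j (S j) t" unfolding Ht_def by simp
    ultimately show ?thesis using True by simp
  next
    case False
    then have conn: "st j \<le> en (Suc j)" by simp
    have fl: "A j - st j \<le> A (Suc j) - st (Suc j)" "B j - en j \<le> B (Suc j) - en (Suc j)"
      using flags[OF j conn] by auto
    show ?thesis
    proof (rule ccontr)
      assume "\<not> ?thesis"
      then have t0: "st j + int (rk (S j) t) \<le> st (Suc j) + int (rk (S (Suc j)) t)"
        unfolding Ht_def by simp
      obtain t' where t: "A j \<le> t'" "t' \<le> B j + 1" "A (Suc j) \<le> t'" "t' \<le> B (Suc j) + 1"
          "st j + int (rk (S j) t') = st (Suc j) + int (rk (S (Suc j)) t')"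
        using meet_touch[OF Pj(1) Qj(1) st_dec[of j] fl(1) _ _ t0] Pj(2) Qj(2) en_dec[of j] fl(2)
        by auto
      have "bad (id, S)"
        by (rule meet_bad[of j "Suc j" t']) (use t jn j in \<open>auto simp: Ht_def\<close>)
      then show False using g by simp
    qed
  qed
qed

lemma adj_good:
  assumes adj: "\<And>j t. Suc j < n \<Longrightarrow> Ht (Suc j) (S (Suc j)) t < Ht j (S j) t"
  shows "\<not> bad (id, S)"
proof -
  have lt: "\<And>j k t. j < k \<Longrightarrow> k < n \<Longrightarrow> Ht k (S k) t < Ht j (S j) t"
  proof -
    fix j k t
    show "j < k \<Longrightarrow> k < n \<Longrightarrow> Ht k (S k) t < Ht j (S j) t"
    proof (induction k)
      case 0 then show ?case by simp
    next
      case (Suc k)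
      have a: "Ht (Suc k) (S (Suc k)) t < Ht k (S k) t" using adj Suc.prems by simp
      show ?case
      proof (cases "j = k")
        case True then show ?thesis using a by simp
      next
        case False
        then have "Ht k (S k) t < Ht j (S j) t" using Suc by simp
        then show ?thesis using a by simp
      qed
    qed
  qed
  show ?thesis
  proof
    assume "bad (id, S)"
    then obtain j k w where jk: "j < n" "k < n" "j \<noteq> k" and w: "w \<in> V id S j" "w \<in> V id S k"
      unfolding bad_def by auto
    obtain u v where "w = (u, v)" by (cases w)
    then have "Ht j (S j) u = Ht k (S k) u" using w by (auto simp: V_mem)
    moreover have "j < k \<or> k < j" using jk by auto
    ultimately show False using lt[of j k u] lt[of k j u] jk by auto
  qed
qed

definition NI where
  "NI = {S \<in> PiE {0..<n} (Cols id). \<forall>j t. Suc j < n \<longrightarrow> Ht (Suc j) (S (Suc j)) t < Ht j (S j) t}"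

theorem lgv_good: "(\<Sum>x\<in>Fam. fw x) = (\<Sum>S\<in>NI. \<Prod>j<n. wtc j (S j))"
proof -
  have eq: "{x\<in>Fam. \<not> bad x} = (\<lambda>S. (id :: nat \<Rightarrow> nat, S)) ` NI"
  proof (intro equalityI subsetI)
    fix x assume "x \<in> {x\<in>Fam. \<not> bad x}"
    then have x: "x \<in> Fam" "\<not> bad x" by auto
    obtain p S where xps: "x = (p, S)" by (cases x)
    have "p = id" using good_id x xps by simp
    then have xid: "x = (id, S)" using xps by simp
    have "S \<in> NI" unfolding NI_def using x Fam_D(2)[OF x(1)] good_adj[of S] unfolding xid by auto
    then show "x \<in> (\<lambda>S. (id :: nat \<Rightarrow> nat, S)) ` NI" using xid by auto
  next
    fix x :: "(nat \<Rightarrow> nat) \<times> (nat \<Rightarrow> int set)"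
    assume "x \<in> (\<lambda>S. (id :: nat \<Rightarrow> nat, S)) ` NI"
    then obtain S where S: "S \<in> NI" "x = (id :: nat \<Rightarrow> nat, S)" by auto
    have "x \<in> Fam" unfolding Fam_def S(2) using S(1) unfolding NI_def
      by (auto simp: permutes_id)
    moreover have "\<not> bad x" unfolding S(2) by (rule adj_good) (use S(1) NI_def in auto)
    ultimately show "x \<in> {x\<in>Fam. \<not> bad x}" by simp
  qed
  have "(\<Sum>x\<in>Fam. fw x) = (\<Sum>x\<in>(\<lambda>S. (id :: nat \<Rightarrow> nat, S)) ` NI. fw x)" using lgv_cancel eq by simp
  also have "\<dots> = (\<Sum>S\<in>NI. fw (id, S))"
    using sum.reindex[of "Pair (id::nat\<Rightarrow>nat)" NI fw] by (simp add: inj_on_def o_def)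
  also have "\<dots> = (\<Sum>S\<in>NI. \<Prod>j<n. wtc j (S j))" unfolding fw_def by (simp add: sign_id)
  finally show ?thesis .
qed

end

context lgv begin

lemma finite_Cols: "finite (Cols p j)"
proof -
  have sub: "Cols p j \<subseteq> Pow {A j..B (p j)}" unfolding Cols_def by auto
  show ?thesis by (rule finite_subset[OF sub]) simp
qed

lemma det_Fam:
  assumes M: "M \<in> carrier_mat n n"
    and ent: "\<And>i j. i < n \<Longrightarrow> j < n \<Longrightarrow>
       M $$ (i, j) = (\<Sum>S\<in>{S. S \<subseteq> {A j..B i} \<and> int (card S) = en i - st j}. wtc j S)"
  shows "det M = (\<Sum>x\<in>Fam. fw x)"
proof -
  have MT: "transpose_mat M \<in> carrier_mat n n" using M by simp
  have "det M = det (transpose_mat M)" using det_transpose[OF M] by simp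
  also have "\<dots> = (\<Sum>p | p permutes {0..<n}. of_int (sign p) * (\<Prod>i = 0..<n. transpose_mat M $$ (i, p i)))"
    by (rule det_def'[OF MT])
  also have "\<dots> = (\<Sum>p | p permutes {0..<n}. of_int (sign p) *
        (\<Sum>S\<in>PiE {0..<n} (Cols p). \<Prod>i = 0..<n. wtc i (S i)))"
  proof (rule sum.cong[OF refl])
    fix p assume "p \<in> {p. p permutes {0..<n}}"
    then have pp: "p permutes {0..<n}" by simp
    have "(\<Prod>i = 0..<n. transpose_mat M $$ (i, p i)) = (\<Prod>i = 0..<n. sum (wtc i) (Cols p i))"
    proof (rule prod.cong[OF refl])
      fix i assume i: "i \<in> {0..<n}"
      then have pi: "p i < n" using pp by (auto dest: permutes_in_image)
      have "transpose_mat M $$ (i, p i) = M $$ (p i, i)" using M i pi by simp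
      also have "\<dots> = sum (wtc i) (Cols p i)" using ent[OF pi, of i] i by (simp add: Cols_def)
      finally show "transpose_mat M $$ (i, p i) = sum (wtc i) (Cols p i)" .
    qed
    also have "\<dots> = (\<Sum>S\<in>PiE {0..<n} (Cols p). \<Prod>i = 0..<n. wtc i (S i))"
      by (rule prod_sum_PiE) (auto simp: finite_Cols)
    finally show "of_int (sign p) * (\<Prod>i = 0..<n. transpose_mat M $$ (i, p i)) =
        of_int (sign p) * (\<Sum>S\<in>PiE {0..<n} (Cols p). \<Prod>i = 0..<n. wtc i (S i))" by simp
  qed
  also have "\<dots> = (\<Sum>p | p permutes {0..<n}. \<Sum>S\<in>PiE {0..<n} (Cols p). fw (p, S))"
    unfolding fw_def by (simp add: sum_distrib_left atLeast0LessThan)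
  also have "\<dots> = (\<Sum>(p, S)\<in>Fam. fw (p, S))" unfolding Fam_def
    by (rule sum.Sigma) (auto simp: finite_permutations finite_Cols intro!: finite_PiE)
  also have "\<dots> = (\<Sum>x\<in>Fam. fw x)" by (simp add: split_def)
  finally show ?thesis .
qed

end

lemma conj_anti: "j \<le> j' \<Longrightarrow> conj_part lam j' \<le> conj_part lam j"
  unfolding conj_part_def by (rule card_mono) auto

lemma conj_sub: "part_subseteq mu lam \<Longrightarrow> 1 \<le> j \<Longrightarrow> conj_part mu j \<le> conj_part lam j"
proof -
  assume sub: "part_subseteq mu lam" and j: "1 \<le> j"
  have "{i \<in> {1..length mu}. j \<le> part_at mu i} \<subseteq> {i \<in> {1..length lam}. j \<le> part_at lam i}"
  proof
    fix i assume "i \<in> {i \<in> {1..length mu}. j \<le> part_at mu i}"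
    then have i: "1 \<le> i" "j \<le> part_at mu i" by auto
    then have "j \<le> part_at lam i" using sub unfolding part_subseteq_def by (metis le_trans)
    then have "part_at lam i \<noteq> 0" using j by auto
    then have "i \<le> length lam" unfolding part_at_def by (auto split: if_splits)
    then show "i \<in> {i \<in> {1..length lam}. j \<le> part_at lam i}" using i \<open>j \<le> part_at lam i\<close> by auto
  qed
  then show ?thesis unfolding conj_part_def by (intro card_mono) auto
qed

lemma part_at_anti:
  assumes p: "is_partition lam" and i: "1 \<le> i'" "i' \<le> i"
  shows "part_at lam i \<le> part_at lam i'"
proof (cases "i \<le> length lam")
  case False then show ?thesis unfolding part_at_def by auto
next
  case True
  show ?thesis
  proof (cases "i' = i")
    case True then show ?thesis by simp
  next
    case False
    then have "i' - 1 < i - 1" using i by auto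
    moreover have "i - 1 < length lam" using True i by auto
    ultimately have "lam ! (i - 1) \<le> lam ! (i' - 1)"
      using p unfolding is_partition_def by (auto simp: sorted_wrt_iff_nth_less)
    then show ?thesis unfolding part_at_def using True i by auto
  qed
qed

lemma downclosed_interval:
  fixes X :: "nat set"
  assumes X: "X \<subseteq> {1..N}" and dc: "\<And>i i'. i \<in> X \<Longrightarrow> 1 \<le> i' \<Longrightarrow> i' \<le> i \<Longrightarrow> i' \<in> X"
  shows "X = {1..card X}"
proof (cases "X = {}")
  case True then show ?thesis by simp
next
  case False
  have fin: "finite X" using X finite_subset by blast
  define m where "m = Max X"
  have mX: "m \<in> X" unfolding m_def using fin False by (rule Max_in)
  have "X = {1..m}"
  proof
    show "X \<subseteq> {1..m}" using X fin unfolding m_def by auto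
    show "{1..m} \<subseteq> X" using dc mX by auto
  qed
  then show ?thesis by simp
qed

lemma conj_iff:
  assumes p: "is_partition lam" and i: "1 \<le> i" and j: "1 \<le> j"
  shows "j \<le> part_at lam i \<longleftrightarrow> i \<le> conj_part lam j"
proof -
  let ?X = "{i \<in> {1..length lam}. j \<le> part_at lam i}"
  have X: "?X = {1..card ?X}"
  proof (rule downclosed_interval[of _ "length lam"])
    show "?X \<subseteq> {1..length lam}" by auto
    fix i i' assume "i \<in> ?X" "1 \<le> i'" "i' \<le> i"
    then show "i' \<in> ?X" using part_at_anti[OF p, of i' i] by auto
  qed
  show ?thesis
  proof
    assume a: "j \<le> part_at lam i"
    then have "part_at lam i \<noteq> 0" using j by auto
    then have "i \<le> length lam" unfolding part_at_def by (auto split: if_splits)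
    then have "i \<in> ?X" using a i by auto
    then have "i \<in> {1..card ?X}" using X by simp
    then show "i \<le> conj_part lam j" unfolding conj_part_def by simp
  next
    assume "i \<le> conj_part lam j"
    then have "i \<in> {1..card ?X}" using i unfolding conj_part_def by simp
    then have "i \<in> ?X" using X by metis
    then show "j \<le> part_at lam i" by simp
  qed
qed

lemma skew_char:
  assumes "is_partition lam" "is_partition mu"
  shows "(r, c) \<in> skew lam mu \<longleftrightarrow> 1 \<le> c \<and> conj_part mu c < r \<and> r \<le> conj_part lam c"
proof (cases "1 \<le> r \<and> 1 \<le> c")
  case True
  then show ?thesis unfolding skew_def diagram_def
    using conj_iff[OF assms(1), of r c] conj_iff[OF assms(2), of r c] by auto
next
  case False
  then show ?thesis unfolding skew_def diagram_def by auto
qed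

lemma skew_le_n:
  assumes "is_partition lam" "is_partition mu" "column_flags lam mu n a b" "(r, c) \<in> skew lam mu"
  shows "c \<le> n"
proof -
  have rc: "1 \<le> c" "conj_part mu c < r" "r \<le> conj_part lam c" using skew_char assms by auto
  then have "1 \<le> conj_part lam c" by simp
  then have "c \<le> part_at lam 1" using conj_iff[OF assms(1), of 1 c] rc by simp
  then show ?thesis using assms(3) unfolding column_flags_def by simp
qed

lemma rk_strict:
  assumes f: "finite X" and s: "s \<in> X" and lt: "s < s'"
  shows "rk X s < rk X s'"
proof -
  have "{x \<in> X. x < s} \<subset> {x \<in> X. x < s'}" using s lt by auto
  then show ?thesis unfolding rk_def using f by (intro psubset_card_mono) auto
qed

lemma rk_lt_card: "finite X \<Longrightarrow> s \<in> X \<Longrightarrow> rk X s < card X"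
proof -
  assume f: "finite X" and s: "s \<in> X"
  have "{x \<in> X. x < s} \<subset> X" using s by auto
  then show ?thesis unfolding rk_def using f by (intro psubset_card_mono) auto
qed

lemma rk_inj: "finite X \<Longrightarrow> inj_on (rk X) X"
proof (rule inj_onI)
  fix s s' assume f: "finite X" and s: "s \<in> X" "s' \<in> X" and e: "rk X s = rk X s'"
  show "s = s'"
  proof (rule ccontr)
    assume "s \<noteq> s'"
    then have "s < s' \<or> s' < s" by auto
    then show False using rk_strict[OF f s(1), of s'] rk_strict[OF f s(2), of s] e by auto
  qed
qed

lemma rk_image: "finite X \<Longrightarrow> rk X ` X = {..<card X}"
proof -
  assume f: "finite X"
  have sub: "rk X ` X \<subseteq> {..<card X}" using rk_lt_card[OF f] by auto
  have "card (rk X ` X) = card X" using card_image[OF rk_inj[OF f]] .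
  then show ?thesis using sub by (intro card_subset_eq) auto
qed

definition elem :: "int set \<Rightarrow> nat \<Rightarrow> int" where
  "elem X k = (THE s. s \<in> X \<and> rk X s = k)"

lemma elem_props:
  assumes f: "finite X" and k: "k < card X"
  shows "elem X k \<in> X" "rk X (elem X k) = k"
proof -
  have "k \<in> rk X ` X" using rk_image[OF f] k by simp
  then obtain s where s: "s \<in> X" "rk X s = k" by auto
  have "\<exists>!s. s \<in> X \<and> rk X s = k"
    using s rk_inj[OF f] by (auto dest: inj_onD)
  then have "elem X k \<in> X \<and> rk X (elem X k) = k" unfolding elem_def by (rule theI')
  then show "elem X k \<in> X" "rk X (elem X k) = k" by auto
qed

lemma elem_rk:
  assumes f: "finite X" and s: "s \<in> X"
  shows "elem X (rk X s) = s"
proof -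
  have k: "rk X s < card X" using rk_lt_card[OF f s] .
  have "rk X (elem X (rk X s)) = rk X s" "elem X (rk X s) \<in> X" using elem_props[OF f k] by auto
  then show ?thesis using rk_inj[OF f] s by (auto dest: inj_onD)
qed

lemma elem_image: "finite X \<Longrightarrow> elem X ` {..<card X} = X"
proof -
  assume f: "finite X"
  have "elem X ` {..<card X} = elem X ` (rk X ` X)" using rk_image[OF f] by simp
  also have "\<dots> = X" using elem_rk[OF f] by (auto simp: image_image)
  finally show ?thesis .
qed

lemma elem_mono:
  assumes f: "finite X" and k: "k < k'" "k' < card X"
  shows "elem X k < elem X k'"
proof (rule ccontr)
  assume "\<not> elem X k < elem X k'"
  then have le: "elem X k' \<le> elem X k" by simp
  have "k < card X" using k by simp
  have "rk X (elem X k') \<le> rk X (elem X k)" using rk_mono[OF f le] .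
  then show False using elem_props[OF f \<open>k < card X\<close>] elem_props[OF f k(2)] k by simp
qed

lemma col_rk:
  fixes f :: "nat \<Rightarrow> int"
  assumes mono: "\<And>r r'. Suc m \<le> r \<Longrightarrow> r < r' \<Longrightarrow> r' \<le> l \<Longrightarrow> f r < f r'"
  shows "inj_on f {Suc m..l}" "card (f ` {Suc m..l}) = l - m"
    "\<And>r. r \<in> {Suc m..l} \<Longrightarrow> rk (f ` {Suc m..l}) (f r) = r - Suc m"
proof -
  show inj: "inj_on f {Suc m..l}"
  proof (rule inj_onI)
    fix r r' assume "r \<in> {Suc m..l}" "r' \<in> {Suc m..l}" "f r = f r'"
    then show "r = r'" using mono[of r r'] mono[of r' r] by (cases "r < r'"; cases "r' < r") auto
  qed
  show "card (f ` {Suc m..l}) = l - m" using card_image[OF inj] by simp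
  fix r assume r: "r \<in> {Suc m..l}"
  have "{x \<in> f ` {Suc m..l}. x < f r} = f ` {Suc m..<r}"
  proof (intro equalityI subsetI)
    fix x assume "x \<in> {x \<in> f ` {Suc m..l}. x < f r}"
    then obtain r' where r': "r' \<in> {Suc m..l}" "x = f r'" "f r' < f r" by auto
    have "r' < r"
    proof (rule ccontr)
      assume "\<not> r' < r"
      then have "r \<le> r'" by simp
      then have "f r \<le> f r'" using mono[of r r'] r r' by (cases "r = r'") auto
      then show False using r' by simp
    qed
    then show "x \<in> f ` {Suc m..<r}" using r' by auto
  next
    fix x assume "x \<in> f ` {Suc m..<r}"
    then obtain r' where r': "r' \<in> {Suc m..<r}" "x = f r'" by auto
    then show "x \<in> {x \<in> f ` {Suc m..l}. x < f r}" using mono[of r' r] r by auto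
  qed
  moreover have "inj_on f {Suc m..<r}" by (rule inj_on_subset[OF inj]) (use r in auto)
  ultimately show "rk (f ` {Suc m..l}) (f r) = r - Suc m" unfolding rk_def
    by (simp add: card_image)
qed

definition Tab :: "nat list \<Rightarrow> nat list \<Rightarrow> (nat \<Rightarrow> int) \<Rightarrow> (nat \<Rightarrow> int) \<Rightarrow> (nat \<times> nat \<Rightarrow> int) set" where
  "Tab lam mu a b = {T. flagged_SSYT lam mu a b T \<and> (\<forall>c. c \<notin> skew lam mu \<longrightarrow> T c = 0)}"

lemma finite_skew: "finite (skew lam mu)"
proof -
  have "skew lam mu \<subseteq> {1..length lam} \<times> {1..Max (insert 0 (set lam))}"
  proof
    fix c assume "c \<in> skew lam mu"
    then obtain i j where c: "c = (i, j)" "1 \<le> i" "1 \<le> j" "j \<le> part_at lam i"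
      unfolding skew_def diagram_def by auto
    then have "part_at lam i \<noteq> 0" by auto
    then have il: "i \<le> length lam" and pa: "part_at lam i = lam ! (i - 1)"
      unfolding part_at_def by (auto split: if_splits)
    have "lam ! (i - 1) \<in> set lam" using il c(2) by auto
    then have "part_at lam i \<le> Max (insert 0 (set lam))" unfolding pa by simp
    then show "c \<in> {1..length lam} \<times> {1..Max (insert 0 (set lam))}" using c il by auto
  qed
  then show ?thesis by (rule finite_subset) simp
qed

definition R0 :: "nat list \<Rightarrow> nat list \<Rightarrow> (nat \<times> nat \<Rightarrow> int) \<Rightarrow> nat \<times> nat \<Rightarrow> int" where
  "R0 lam mu T = (\<lambda>c. if c \<in> skew lam mu then T c else 0)"

lemma flagged_R0: "flagged_SSYT lam mu a b T \<Longrightarrow> flagged_SSYT lam mu a b (R0 lam mu T)"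
  unfolding flagged_SSYT_def R0_def by simp

lemma super_R0: "super_of lam mu r (R0 lam mu T) P = super_of lam mu r T P"
  unfolding super_of_def R0_def by (rule ext) simp

lemma ST_image: "ST lam mu r a b = (\<lambda>(T, P). super_of lam mu r T P) ` (Tab lam mu a b \<times> Pow (skew lam mu))"
proof (intro equalityI subsetI)
  fix X assume "X \<in> ST lam mu r a b"
  then obtain T P where X: "X = super_of lam mu r T P" "flagged_SSYT lam mu a b T" "P \<subseteq> skew lam mu"
    unfolding ST_def by auto
  have "R0 lam mu T \<in> Tab lam mu a b" unfolding Tab_def using flagged_R0[OF X(2)]
    by (auto simp: R0_def)
  moreover have "X = super_of lam mu r (R0 lam mu T) P" using X(1) super_R0 by simp
  ultimately show "X \<in> (\<lambda>(T, P). super_of lam mu r T P) ` (Tab lam mu a b \<times> Pow (skew lam mu))"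
    using X(3) by auto
next
  fix X assume "X \<in> (\<lambda>(T, P). super_of lam mu r T P) ` (Tab lam mu a b \<times> Pow (skew lam mu))"
  then obtain T P where "X = super_of lam mu r T P" "T \<in> Tab lam mu a b" "P \<subseteq> skew lam mu" by auto
  then show "X \<in> ST lam mu r a b" unfolding ST_def Tab_def by auto
qed

lemma super_inj: "inj_on (\<lambda>(T, P). super_of lam mu r T P) (Tab lam mu a b \<times> Pow (skew lam mu))"
proof (rule inj_onI)
  fix x x' assume x: "x \<in> Tab lam mu a b \<times> Pow (skew lam mu)" and x': "x' \<in> Tab lam mu a b \<times> Pow (skew lam mu)"
    and e0: "(\<lambda>(T, P). super_of lam mu r T P) x = (\<lambda>(T, P). super_of lam mu r T P) x'"
  obtain T P where xs: "x = (T, P)" by (cases x)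
  obtain T' P' where xs': "x' = (T', P')" by (cases x')
  have T: "T \<in> Tab lam mu a b" "P \<subseteq> skew lam mu" using x xs by auto
  have T': "T' \<in> Tab lam mu a b" "P' \<subseteq> skew lam mu" using x' xs' by auto
  have e: "super_of lam mu r T P = super_of lam mu r T' P'" using e0 xs xs' by simp
  have ec: "\<And>c. c \<in> skew lam mu \<Longrightarrow> (c \<in> P \<longleftrightarrow> c \<in> P') \<and> T c = T' c"
  proof -
    fix c assume c: "c \<in> skew lam mu"
    have "super_of lam mu r T P c = super_of lam mu r T' P' c" using e by simp
    then show "(c \<in> P \<longleftrightarrow> c \<in> P') \<and> T c = T' c" using c unfolding super_of_def
      by (auto split: if_splits)
  qed
  have TT: "T = T'"
  proof (rule ext)
    fix c show "T c = T' c"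
    proof (cases "c \<in> skew lam mu")
      case True then show ?thesis using ec[of c] by simp
    next
      case False
      have "T c = 0" "T' c = 0" using False T(1) T'(1) unfolding Tab_def by blast+
      then show ?thesis by simp
    qed
  qed
  have "P = P'" using ec T(2) T'(2) by blast
  then show "x = x'" using TT xs xs' by simp
qed

lemma finite_Tab: "finite (Tab lam mu a b)"
proof -
  let ?W = "\<Union>c\<in>skew lam mu. {a (snd c)..b (snd c)}"
  have "Tab lam mu a b \<subseteq> {T. \<forall>x. (x \<in> skew lam mu \<longrightarrow> T x \<in> ?W) \<and> (x \<notin> skew lam mu \<longrightarrow> T x = 0)}"
  proof
    fix T assume T: "T \<in> Tab lam mu a b"
    show "T \<in> {T. \<forall>x. (x \<in> skew lam mu \<longrightarrow> T x \<in> ?W) \<and> (x \<notin> skew lam mu \<longrightarrow> T x = 0)}"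
    proof (intro CollectI allI conjI impI)
      fix x assume x: "x \<in> skew lam mu"
      obtain i j where ij: "x = (i, j)" by (cases x)
      have "a j \<le> T (i, j) \<and> T (i, j) \<le> b j" using T x ij unfolding Tab_def flagged_SSYT_def by blast
      then show "T x \<in> ?W" using x ij by force
    next
      fix x assume "x \<notin> skew lam mu"
      then show "T x = 0" using T unfolding Tab_def by blast
    qed
  qed
  moreover have "finite {T. \<forall>x. (x \<in> skew lam mu \<longrightarrow> T x \<in> ?W) \<and> (x \<notin> skew lam mu \<longrightarrow> T x = (0::int))}"
    by (rule finite_set_of_finite_funs) (auto simp: finite_skew)
  ultimately show ?thesis by (rule finite_subset)
qed

lemma wt_super:
  assumes "P \<subseteq> skew lam mu"
  shows "wt lam mu y z (super_of lam mu r T P) =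
    (\<Prod>c\<in>skew lam mu. if c \<in> P then - z (T c + content lam r c) else y (T c))"
  unfolding wt_def by (rule prod.cong[OF refl]) (auto simp: super_of_def wt_entry_def)

lemma sum_pow_prod:
  assumes fA: "finite A"
  shows "(\<Sum>P\<in>Pow A. \<Prod>c\<in>A. if c \<in> P then g c else f c) = (\<Prod>c\<in>A. g c + (f c :: 'a::comm_ring_1))"
proof -
  have "(\<Prod>c\<in>A. g c + f c) = (\<Sum>P\<in>Pow A. prod g P * prod f (A - P))" by (rule prod_add[OF fA])
  also have "\<dots> = (\<Sum>P\<in>Pow A. \<Prod>c\<in>A. if c \<in> P then g c else f c)"
  proof (rule sum.cong[OF refl])
    fix P assume "P \<in> Pow A"
    then have P: "P \<subseteq> A" by simp
    have "(\<Prod>c\<in>A. if c \<in> P then g c else f c) = prod g (A \<inter> {c. c \<in> P}) * prod f (A \<inter> - {c. c \<in> P})"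
      by (rule prod.If_cases[OF fA])
    also have "A \<inter> {c. c \<in> P} = P" using P by auto
    also have "A \<inter> - {c. c \<in> P} = A - P" by auto
    finally show "prod g P * prod f (A - P) = (\<Prod>c\<in>A. if c \<in> P then g c else f c)" by simp
  qed
  finally show ?thesis by simp
qed

theorem ST_sum:
  "(\<Sum>X\<in>ST lam mu r a b. wt lam mu y z X) =
   (\<Sum>T\<in>Tab lam mu a b. \<Prod>c\<in>skew lam mu. (y (T c) - z (T c + content lam r c)))"
proof -
  have "(\<Sum>X\<in>ST lam mu r a b. wt lam mu y z X) =
      (\<Sum>x\<in>Tab lam mu a b \<times> Pow (skew lam mu). wt lam mu y z ((\<lambda>(T, P). super_of lam mu r T P) x))"
    unfolding ST_image by (rule sum.reindex[OF super_inj, unfolded o_def])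
  also have "\<dots> = (\<Sum>T\<in>Tab lam mu a b. \<Sum>P\<in>Pow (skew lam mu). wt lam mu y z (super_of lam mu r T P))"
    by (simp add: sum.cartesian_product split_def)
  also have "\<dots> = (\<Sum>T\<in>Tab lam mu a b. \<Prod>c\<in>skew lam mu. (y (T c) - z (T c + content lam r c)))"
  proof (rule sum.cong[OF refl])
    fix T
    have "(\<Sum>P\<in>Pow (skew lam mu). wt lam mu y z (super_of lam mu r T P)) =
        (\<Sum>P\<in>Pow (skew lam mu). \<Prod>c\<in>skew lam mu. if c \<in> P then - z (T c + content lam r c) else y (T c))"
      by (rule sum.cong[OF refl]) (simp add: wt_super)
    also have "\<dots> = (\<Prod>c\<in>skew lam mu. - z (T c + content lam r c) + y (T c))"
      by (rule sum_pow_prod[OF finite_skew])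
    finally show "(\<Sum>P\<in>Pow (skew lam mu). wt lam mu y z (super_of lam mu r T P)) =
        (\<Prod>c\<in>skew lam mu. (y (T c) - z (T c + content lam r c)))" by simp
  qed
  finally show ?thesis .
qed

definition rowsj :: "nat list \<Rightarrow> nat list \<Rightarrow> nat \<Rightarrow> nat set" where
  "rowsj lam mu j = {Suc (conj_part mu (Suc j))..conj_part lam (Suc j)}"

definition colT :: "nat list \<Rightarrow> nat list \<Rightarrow> nat \<Rightarrow> (nat \<times> nat \<Rightarrow> int) \<Rightarrow> nat \<Rightarrow> int set" where
  "colT lam mu n T = restrict (\<lambda>j. (\<lambda>r. T (r, Suc j)) ` rowsj lam mu j) {0..<n}"

definition tabS :: "nat list \<Rightarrow> nat list \<Rightarrow> (nat \<Rightarrow> int set) \<Rightarrow> nat \<times> nat \<Rightarrow> int" where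
  "tabS lam mu S = (\<lambda>(r, c). if (r, c) \<in> skew lam mu then elem (S (c - 1)) (r - Suc (conj_part mu c)) else 0)"

definition NIx :: "nat list \<Rightarrow> nat list \<Rightarrow> nat \<Rightarrow> (nat \<Rightarrow> int) \<Rightarrow> (nat \<Rightarrow> int) \<Rightarrow> (nat \<Rightarrow> int set) set" where
  "NIx lam mu n a b = {S \<in> PiE {0..<n} (\<lambda>j. {X. X \<subseteq> {a (Suc j)..b (Suc j)} \<and>
        int (card X) = int (conj_part lam (Suc j)) - int (conj_part mu (Suc j))}).
     \<forall>j t. Suc j < n \<longrightarrow> int (conj_part mu (Suc (Suc j))) - int (Suc j) + int (rk (S (Suc j)) t)
        < int (conj_part mu (Suc j)) - int j + int (rk (S j) t)}"

lemma rk_image_inj: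
  assumes inj: "inj_on f R"
  shows "rk (f ` R) t = card {r \<in> R. f r < t}"
proof -
  have "{x \<in> f ` R. x < t} = f ` {r \<in> R. f r < t}" by auto
  moreover have "inj_on f {r \<in> R. f r < t}" by (rule inj_on_subset[OF inj]) auto
  ultimately show ?thesis unfolding rk_def by (simp add: card_image)
qed

context
  fixes lam mu :: "nat list" and n :: nat and a b :: "nat \<Rightarrow> int"
  assumes plam: "is_partition lam" and pmu: "is_partition mu" and psub: "part_subseteq mu lam"
    and cf: "column_flags lam mu n a b"
begin

lemma skew_iff: "(r, c) \<in> skew lam mu \<longleftrightarrow> (\<exists>j<n. c = Suc j \<and> r \<in> rowsj lam mu j)"
proof
  assume rc: "(r, c) \<in> skew lam mu"
  have c: "1 \<le> c" "conj_part mu c < r" "r \<le> conj_part lam c" using skew_char[OF plam pmu] rc by auto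
  have "c \<le> n" using skew_le_n[OF plam pmu cf rc] .
  then show "\<exists>j<n. c = Suc j \<and> r \<in> rowsj lam mu j" using c unfolding rowsj_def
    by (intro exI[of _ "c - 1"]) auto
next
  assume "\<exists>j<n. c = Suc j \<and> r \<in> rowsj lam mu j"
  then show "(r, c) \<in> skew lam mu" using skew_char[OF plam pmu] unfolding rowsj_def by auto
qed

lemma mu_le_lam: "conj_part mu (Suc j) \<le> conj_part lam (Suc j)"
  using conj_sub[OF psub] by simp

lemma col_strict:
  assumes T: "T \<in> Tab lam mu a b" and j: "j < n"
  shows "\<And>r r'. Suc (conj_part mu (Suc j)) \<le> r \<Longrightarrow> r < r' \<Longrightarrow> r' \<le> conj_part lam (Suc j) \<Longrightarrow>
     T (r, Suc j) < T (r', Suc j)"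
proof -
  have adj: "\<And>i. (i, Suc j) \<in> skew lam mu \<Longrightarrow> (i + 1, Suc j) \<in> skew lam mu \<Longrightarrow> T (i, Suc j) < T (i + 1, Suc j)"
    using T unfolding Tab_def flagged_SSYT_def by blast
  fix r r' assume r: "Suc (conj_part mu (Suc j)) \<le> r" "r < r'" "r' \<le> conj_part lam (Suc j)"
  have "\<And>k. Suc r + k \<le> conj_part lam (Suc j) \<Longrightarrow> T (r, Suc j) < T (Suc r + k, Suc j)"
  proof -
    fix k show "Suc r + k \<le> conj_part lam (Suc j) \<Longrightarrow> T (r, Suc j) < T (Suc r + k, Suc j)"
    proof (induction k)
      case 0
      have "(r, Suc j) \<in> skew lam mu" "(r + 1, Suc j) \<in> skew lam mu"
        using 0 r j unfolding skew_iff rowsj_def by auto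
      then show ?case using adj by simp
    next
      case (Suc k)
      have "(Suc r + k, Suc j) \<in> skew lam mu" "(Suc r + k + 1, Suc j) \<in> skew lam mu"
        using Suc.prems r j unfolding skew_iff rowsj_def by auto
      then have "T (Suc r + k, Suc j) < T (Suc r + Suc k, Suc j)" using adj by simp
      then show ?case using Suc by simp
    qed
  qed
  from this[of "r' - Suc r"] show "T (r, Suc j) < T (r', Suc j)" using r by simp
qed

lemma col_props:
  assumes T: "T \<in> Tab lam mu a b" and j: "j < n"
  defines "f \<equiv> \<lambda>r. T (r, Suc j)" and "R \<equiv> rowsj lam mu j"
  shows "inj_on f R" "card (f ` R) = conj_part lam (Suc j) - conj_part mu (Suc j)"
    "\<And>r. r \<in> R \<Longrightarrow> rk (f ` R) (f r) = r - Suc (conj_part mu (Suc j))"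
    "f ` R \<subseteq> {a (Suc j)..b (Suc j)}"
proof -
  note cr = col_rk[of "conj_part mu (Suc j)" "conj_part lam (Suc j)" f]
  have mono: "\<And>r r'. Suc (conj_part mu (Suc j)) \<le> r \<Longrightarrow> r < r' \<Longrightarrow> r' \<le> conj_part lam (Suc j) \<Longrightarrow> f r < f r'"
    unfolding f_def using col_strict[OF T j] by blast
  show "inj_on f R" "card (f ` R) = conj_part lam (Suc j) - conj_part mu (Suc j)"
    "\<And>r. r \<in> R \<Longrightarrow> rk (f ` R) (f r) = r - Suc (conj_part mu (Suc j))"
    using cr[OF mono] unfolding R_def rowsj_def by auto
  show "f ` R \<subseteq> {a (Suc j)..b (Suc j)}"
  proof
    fix x assume "x \<in> f ` R"
    then obtain r where r: "r \<in> R" "x = f r" by auto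
    then have "(r, Suc j) \<in> skew lam mu" using j unfolding skew_iff R_def by auto
    then show "x \<in> {a (Suc j)..b (Suc j)}" using T r unfolding Tab_def flagged_SSYT_def f_def by auto
  qed
qed

lemma colT_NI:
  assumes T: "T \<in> Tab lam mu a b"
  shows "colT lam mu n T \<in> NIx lam mu n a b"
proof -
  have pi: "colT lam mu n T \<in> PiE {0..<n} (\<lambda>j. {X. X \<subseteq> {a (Suc j)..b (Suc j)} \<and>
        int (card X) = int (conj_part lam (Suc j)) - int (conj_part mu (Suc j))})"
  proof -
    have "\<And>j. j \<in> {0..<n} \<Longrightarrow> (\<lambda>r. T (r, Suc j)) ` rowsj lam mu j \<in> {X. X \<subseteq> {a (Suc j)..b (Suc j)} \<and>
        int (card X) = int (conj_part lam (Suc j)) - int (conj_part mu (Suc j))}"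
      using col_props[OF T] mu_le_lam by (auto simp: of_nat_diff)
    then show ?thesis unfolding colT_def restrict_PiE_iff by blast
  qed
  have adj: "\<And>j t. Suc j < n \<Longrightarrow> int (conj_part mu (Suc (Suc j))) - int (Suc j) + int (rk (colT lam mu n T (Suc j)) t)
        < int (conj_part mu (Suc j)) - int j + int (rk (colT lam mu n T j) t)"
  proof -
    fix j t assume j1: "Suc j < n"
    then have j: "j < n" by simp
    define f where "f = (\<lambda>r. T (r, Suc j))"
    define f' where "f' = (\<lambda>r. T (r, Suc (Suc j)))"
    define R where "R = rowsj lam mu j"
    define R' where "R' = rowsj lam mu (Suc j)"
    have c1: "colT lam mu n T j = f ` R" unfolding colT_def f_def R_def using j by simp
    have c2: "colT lam mu n T (Suc j) = f' ` R'" unfolding colT_def f'_def R'_def using j1 by simp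
    have injf: "inj_on f R" using col_props(1)[OF T j] unfolding f_def R_def .
    have injf': "inj_on f' R'" using col_props(1)[OF T j1] unfolding f'_def R'_def .
    let ?M1 = "conj_part mu (Suc j)" and ?M2 = "conj_part mu (Suc (Suc j))"
    let ?L1 = "conj_part lam (Suc j)" and ?L2 = "conj_part lam (Suc (Suc j))"
    have M21: "?M2 \<le> ?M1" by (rule conj_anti) simp
    have L21: "?L2 \<le> ?L1" by (rule conj_anti) simp
    define Rt' where "Rt' = {r \<in> R'. f' r < t}"
    define Rt where "Rt = {r \<in> R. f r < t}"
    have rk2: "rk (colT lam mu n T (Suc j)) t = card Rt'" unfolding c2 Rt'_def by (rule rk_image_inj[OF injf'])
    have rk1: "rk (colT lam mu n T j) t = card Rt" unfolding c1 Rt_def by (rule rk_image_inj[OF injf])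
    have key: "?M2 + card Rt' \<le> ?M1 + card Rt"
    proof (cases "Rt' = {}")
      case True then show ?thesis using M21 by simp
    next
      case False
      have finR': "finite Rt'" unfolding Rt'_def R'_def rowsj_def by simp
      define \<rho> where "\<rho> = Max Rt'"
      have \<rho>in: "\<rho> \<in> Rt'" unfolding \<rho>_def using finR' False by (rule Max_in)
      have sub: "Rt' \<subseteq> {Suc ?M2..\<rho>}" using finR' unfolding \<rho>_def Rt'_def R'_def rowsj_def by auto
      have cRt': "card Rt' \<le> \<rho> - ?M2" using card_mono[OF _ sub] by simp
      have \<rho>ge: "Suc ?M2 \<le> \<rho>" using sub \<rho>in by auto
      show ?thesis
      proof (cases "\<rho> \<le> ?M1")
        case True then show ?thesis using cRt' \<rho>ge by simp
      next
        case False
        have \<rho>R': "\<rho> \<in> R'" "f' \<rho> < t" using \<rho>in unfolding Rt'_def by auto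
        then have \<rho>L: "\<rho> \<le> ?L2" unfolding R'_def rowsj_def by simp
        have \<rho>R: "\<rho> \<in> R" using False \<rho>L L21 unfolding R_def rowsj_def by simp
        have s1: "(\<rho>, Suc j) \<in> skew lam mu" using \<rho>R j unfolding skew_iff R_def by auto
        have s2: "(\<rho>, Suc j + 1) \<in> skew lam mu" using \<rho>R'(1) j1 unfolding skew_iff R'_def by auto
        have rowT: "\<And>i c. (i, c) \<in> skew lam mu \<Longrightarrow> (i, c + 1) \<in> skew lam mu \<Longrightarrow> T (i, c) \<le> T (i, c + 1)"
          using T unfolding Tab_def flagged_SSYT_def by blast
        have "f \<rho> \<le> f' \<rho>" using rowT[OF s1 s2] unfolding f_def f'_def by simp
        then have f\<rho>: "f \<rho> < t" using \<rho>R' by simp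
        have "{Suc ?M1..\<rho>} \<subseteq> Rt"
        proof
          fix q assume q: "q \<in> {Suc ?M1..\<rho>}"
          then have qR: "q \<in> R" using \<rho>R unfolding R_def rowsj_def by auto
          have "f q \<le> f \<rho>"
          proof (cases "q = \<rho>")
            case True then show ?thesis by simp
          next
            case False
            then have "q < \<rho>" using q by simp
            then show ?thesis using col_strict[OF T j, of q \<rho>] q \<rho>R unfolding f_def R_def rowsj_def by simp
          qed
          then show "q \<in> Rt" using qR f\<rho> unfolding Rt_def by simp
        qed
        moreover have "finite Rt" unfolding Rt_def R_def rowsj_def by simp
        ultimately have "card {Suc ?M1..\<rho>} \<le> card Rt" by (intro card_mono)
        then have "\<rho> - ?M1 \<le> card Rt" by simp
        then show ?thesis using cRt' False \<rho>ge by simp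
      qed
    qed
    show "int ?M2 - int (Suc j) + int (rk (colT lam mu n T (Suc j)) t)
        < int ?M1 - int j + int (rk (colT lam mu n T j) t)"
      unfolding rk1 rk2 using key by simp
  qed
  show ?thesis unfolding NIx_def
  proof (rule CollectI, rule conjI)
    show "colT lam mu n T \<in> PiE {0..<n} (\<lambda>j. {X. X \<subseteq> {a (Suc j)..b (Suc j)} \<and>
        int (card X) = int (conj_part lam (Suc j)) - int (conj_part mu (Suc j))})" by (rule pi)
    show "\<forall>j t. Suc j < n \<longrightarrow> int (conj_part mu (Suc (Suc j))) - int (Suc j) + int (rk (colT lam mu n T (Suc j)) t)
        < int (conj_part mu (Suc j)) - int j + int (rk (colT lam mu n T j) t)" using adj by blast
  qed
qed


lemma NIx_D:
  assumes S: "S \<in> NIx lam mu n a b" and j: "j < n"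
  shows "S j \<subseteq> {a (Suc j)..b (Suc j)}" "card (S j) = conj_part lam (Suc j) - conj_part mu (Suc j)"
    "finite (S j)"
proof -
  have "S j \<in> {X. X \<subseteq> {a (Suc j)..b (Suc j)} \<and>
        int (card X) = int (conj_part lam (Suc j)) - int (conj_part mu (Suc j))}"
    using S j unfolding NIx_def by (auto simp: PiE_iff)
  then show "S j \<subseteq> {a (Suc j)..b (Suc j)}" "card (S j) = conj_part lam (Suc j) - conj_part mu (Suc j)"
    by auto
  then show "finite (S j)" using finite_subset by blast
qed

lemma tabS_Tab:
  assumes S: "S \<in> NIx lam mu n a b"
  shows "tabS lam mu S \<in> Tab lam mu a b"
proof -
  let ?T = "tabS lam mu S"
  have Tv: "\<And>r j. j < n \<Longrightarrow> r \<in> rowsj lam mu j \<Longrightarrow>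
      ?T (r, Suc j) = elem (S j) (r - Suc (conj_part mu (Suc j))) \<and>
      elem (S j) (r - Suc (conj_part mu (Suc j))) \<in> S j \<and>
      rk (S j) (elem (S j) (r - Suc (conj_part mu (Suc j)))) = r - Suc (conj_part mu (Suc j))"
  proof -
    fix r j assume j: "j < n" and r: "r \<in> rowsj lam mu j"
    have sk: "(r, Suc j) \<in> skew lam mu" using skew_iff j r by auto
    have k: "r - Suc (conj_part mu (Suc j)) < card (S j)" using NIx_D(2)[OF S j] r unfolding rowsj_def by auto
    show "?T (r, Suc j) = elem (S j) (r - Suc (conj_part mu (Suc j))) \<and>
      elem (S j) (r - Suc (conj_part mu (Suc j))) \<in> S j \<and>
      rk (S j) (elem (S j) (r - Suc (conj_part mu (Suc j)))) = r - Suc (conj_part mu (Suc j))"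
      using sk elem_props[OF NIx_D(3)[OF S j] k] unfolding tabS_def by simp
  qed
  have flag: "\<And>i c. (i, c) \<in> skew lam mu \<Longrightarrow> a c \<le> ?T (i, c) \<and> ?T (i, c) \<le> b c"
  proof -
    fix i c assume "(i, c) \<in> skew lam mu"
    then obtain j where j: "j < n" "c = Suc j" "i \<in> rowsj lam mu j" using skew_iff by auto
    then show "a c \<le> ?T (i, c) \<and> ?T (i, c) \<le> b c" using Tv[OF j(1) j(3)] NIx_D(1)[OF S j(1)] by auto
  qed
  have colst: "\<And>i c. (i, c) \<in> skew lam mu \<Longrightarrow> (i + 1, c) \<in> skew lam mu \<Longrightarrow> ?T (i, c) < ?T (i + 1, c)"
  proof -
    fix i c assume s1: "(i, c) \<in> skew lam mu" and s2: "(i + 1, c) \<in> skew lam mu"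
    then obtain j where j: "j < n" "c = Suc j" "i \<in> rowsj lam mu j" using skew_iff by auto
    have j2: "i + 1 \<in> rowsj lam mu j" using s2 j skew_iff by auto
    have k: "i + 1 - Suc (conj_part mu (Suc j)) < card (S j)" using NIx_D(2)[OF S j(1)] j2 unfolding rowsj_def by auto
    have "elem (S j) (i - Suc (conj_part mu (Suc j))) < elem (S j) (i + 1 - Suc (conj_part mu (Suc j)))"
      by (rule elem_mono[OF NIx_D(3)[OF S j(1)] _ k]) (use j(3) in \<open>auto simp: rowsj_def\<close>)
    then show "?T (i, c) < ?T (i + 1, c)" using Tv[OF j(1) j(3)] Tv[OF j(1) j2] j(2) by simp
  qed
  have rowwk: "\<And>i c. (i, c) \<in> skew lam mu \<Longrightarrow> (i, c + 1) \<in> skew lam mu \<Longrightarrow> ?T (i, c) \<le> ?T (i, c + 1)"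
  proof -
    fix i c assume s1: "(i, c) \<in> skew lam mu" and s2: "(i, c + 1) \<in> skew lam mu"
    then obtain j where j: "j < n" "c = Suc j" "i \<in> rowsj lam mu j" using skew_iff by auto
    obtain j' where j': "j' < n" "c + 1 = Suc j'" "i \<in> rowsj lam mu j'" using s2 skew_iff by auto
    have jj: "j' = Suc j" using j j' by simp
    have j1: "Suc j < n" using j' jj by simp
    let ?k = "i - Suc (conj_part mu (Suc j))" and ?k' = "i - Suc (conj_part mu (Suc (Suc j)))"
    define s' where "s' = elem (S (Suc j)) ?k'"
    define e where "e = elem (S j) ?k"
    have s'p: "s' \<in> S (Suc j)" "rk (S (Suc j)) s' = ?k'" using Tv[OF j1, of i] j'(3) jj unfolding s'_def by auto
    have ep: "e \<in> S j" "rk (S j) e = ?k" using Tv[OF j(1) j(3)] unfolding e_def by auto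
    have fin: "finite (S j)" "finite (S (Suc j))" using NIx_D(3)[OF S] j(1) j1 by auto
    have adj: "int (conj_part mu (Suc (Suc j))) - int (Suc j) + int (rk (S (Suc j)) (s' + 1))
        < int (conj_part mu (Suc j)) - int j + int (rk (S j) (s' + 1))"
      using S j1 unfolding NIx_def by blast
    have "rk (S (Suc j)) (s' + 1) = ?k' + 1" using rk_Suc[OF fin(2), of s'] s'p by simp
    moreover have "Suc (conj_part mu (Suc (Suc j))) \<le> i" using j'(3) jj unfolding rowsj_def by simp
    ultimately have big: "i - conj_part mu (Suc j) \<le> rk (S j) (s' + 1)" using adj by simp
    have "e \<le> s'"
    proof (rule ccontr)
      assume "\<not> e \<le> s'"
      then have "s' + 1 \<le> e" by simp
      then have "rk (S j) (s' + 1) \<le> rk (S j) e" by (rule rk_mono[OF fin(1)])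
      moreover have "Suc (conj_part mu (Suc j)) \<le> i" using j(3) unfolding rowsj_def by simp
      ultimately show False using big ep by simp
    qed
    then show "?T (i, c) \<le> ?T (i, c + 1)"
      using Tv[OF j(1) j(3)] Tv[OF j1, of i] j'(3) jj j(2) unfolding e_def s'_def by simp
  qed
  have zero: "\<And>c. c \<notin> skew lam mu \<Longrightarrow> ?T c = 0" unfolding tabS_def by auto
  show ?thesis unfolding Tab_def flagged_SSYT_def
    using flag colst rowwk zero by blast
qed

lemma tabS_colT:
  assumes T: "T \<in> Tab lam mu a b"
  shows "tabS lam mu (colT lam mu n T) = T"
proof (rule ext)
  fix c :: "nat \<times> nat"
  obtain i k where c: "c = (i, k)" by (cases c)
  show "tabS lam mu (colT lam mu n T) c = T c"
  proof (cases "(i, k) \<in> skew lam mu")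
    case True
    then obtain j where j: "j < n" "k = Suc j" "i \<in> rowsj lam mu j" using skew_iff by auto
    have ct: "colT lam mu n T j = (\<lambda>r. T (r, Suc j)) ` rowsj lam mu j" unfolding colT_def using j by simp
    have fin: "finite (colT lam mu n T j)" unfolding ct rowsj_def by simp
    have mem: "T (i, Suc j) \<in> colT lam mu n T j" unfolding ct using j(3) by auto
    have rk: "rk (colT lam mu n T j) (T (i, Suc j)) = i - Suc (conj_part mu (Suc j))"
      unfolding ct using col_props(3)[OF T j(1) j(3)] by simp
    show ?thesis unfolding c tabS_def using True j elem_rk[OF fin mem] rk by simp
  next
    case False
    then show ?thesis using T unfolding c tabS_def Tab_def by auto
  qed
qed

lemma colT_tabS:
  assumes S: "S \<in> NIx lam mu n a b"
  shows "colT lam mu n (tabS lam mu S) = S"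
proof (rule ext)
  fix j
  show "colT lam mu n (tabS lam mu S) j = S j"
  proof (cases "j < n")
    case False
    have "S \<in> extensional {0..<n}" using S unfolding NIx_def by (auto simp: PiE_iff)
    then have "S j = undefined" using False by (auto simp: extensional_def)
    then show ?thesis unfolding colT_def using False by simp
  next
    case True
    let ?m = "Suc (conj_part mu (Suc j))"
    have "(\<lambda>r. tabS lam mu S (r, Suc j)) ` rowsj lam mu j = (\<lambda>r. elem (S j) (r - ?m)) ` rowsj lam mu j"
    proof (rule image_cong[OF refl])
      fix r assume "r \<in> rowsj lam mu j"
      then have "(r, Suc j) \<in> skew lam mu" using skew_iff True by auto
      then show "tabS lam mu S (r, Suc j) = elem (S j) (r - ?m)" unfolding tabS_def by simp
    qed
    also have "\<dots> = elem (S j) ` ((\<lambda>r. r - ?m) ` rowsj lam mu j)" by (simp add: image_image)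
    also have "(\<lambda>r. r - ?m) ` rowsj lam mu j = {..<card (S j)}"
    proof -
      have "(\<lambda>r. r - ?m) ` {?m..conj_part lam (Suc j)} = {..<conj_part lam (Suc j) - conj_part mu (Suc j)}"
      proof (intro equalityI subsetI)
        fix x assume "x \<in> (\<lambda>r. r - ?m) ` {?m..conj_part lam (Suc j)}"
        then show "x \<in> {..<conj_part lam (Suc j) - conj_part mu (Suc j)}" by auto
      next
        fix x assume x: "x \<in> {..<conj_part lam (Suc j) - conj_part mu (Suc j)}"
        then have "x + ?m \<in> {?m..conj_part lam (Suc j)}" by auto
        moreover have "x = (x + ?m) - ?m" by simp
        ultimately show "x \<in> (\<lambda>r. r - ?m) ` {?m..conj_part lam (Suc j)}" by blast
      qed
      then show ?thesis unfolding rowsj_def using NIx_D(2)[OF S True] by simp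
    qed
    also have "elem (S j) ` {..<card (S j)} = S j" by (rule elem_image[OF NIx_D(3)[OF S True]])
    finally show ?thesis unfolding colT_def using True by simp
  qed
qed

lemma skew_Sigma:
  "skew lam mu = (\<lambda>(j, r). (r, Suc j)) ` (SIGMA j:{..<n}. rowsj lam mu j)"
proof (intro equalityI subsetI)
  fix c assume "c \<in> skew lam mu"
  moreover obtain i k where c: "c = (i, k)" by (cases c)
  ultimately obtain j where "j < n" "k = Suc j" "i \<in> rowsj lam mu j" using skew_iff by auto
  then show "c \<in> (\<lambda>(j, r). (r, Suc j)) ` (SIGMA j:{..<n}. rowsj lam mu j)" using c by force
next
  fix c assume "c \<in> (\<lambda>(j, r). (r, Suc j)) ` (SIGMA j:{..<n}. rowsj lam mu j)"
  then obtain j i where "c = (i, Suc j)" "j < n" "i \<in> rowsj lam mu j" by auto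
  then show "c \<in> skew lam mu" using skew_iff by auto
qed

lemma weight_eq:
  assumes T: "T \<in> Tab lam mu a b"
  shows "(\<Prod>j<n. \<Prod>s\<in>colT lam mu n T j. (y s - z (s + (rp - 1 + int (conj_part lam 1)) -
            (int (conj_part mu (Suc j)) - int j + int (rk (colT lam mu n T j) s))))) =
         (\<Prod>c\<in>skew lam mu. (y (T c) - z (T c + content lam rp c)))"
proof -
  let ?K = "rp - 1 + int (conj_part lam 1)"
  let ?H = "\<lambda>c. y (T c) - z (T c + content lam rp c)"
  have col: "\<And>j. j < n \<Longrightarrow> (\<Prod>s\<in>colT lam mu n T j. (y s - z (s + ?K -
            (int (conj_part mu (Suc j)) - int j + int (rk (colT lam mu n T j) s))))) =
         (\<Prod>r\<in>rowsj lam mu j. ?H (r, Suc j))"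
  proof -
    fix j assume j: "j < n"
    define f where "f = (\<lambda>r. T (r, Suc j))"
    have ct: "colT lam mu n T j = f ` rowsj lam mu j" unfolding colT_def f_def using j by simp
    have inj: "inj_on f (rowsj lam mu j)" using col_props(1)[OF T j] unfolding f_def .
    have "(\<Prod>s\<in>colT lam mu n T j. (y s - z (s + ?K -
            (int (conj_part mu (Suc j)) - int j + int (rk (colT lam mu n T j) s))))) =
        (\<Prod>r\<in>rowsj lam mu j. (y (f r) - z (f r + ?K -
            (int (conj_part mu (Suc j)) - int j + int (rk (f ` rowsj lam mu j) (f r))))))"
      unfolding ct by (rule prod.reindex[OF inj, unfolded o_def])
    also have "\<dots> = (\<Prod>r\<in>rowsj lam mu j. ?H (r, Suc j))"
    proof (rule prod.cong[OF refl])
      fix r assume r: "r \<in> rowsj lam mu j"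
      have rk: "rk ((\<lambda>r. T (r, Suc j)) ` rowsj lam mu j) (T (r, Suc j)) = r - Suc (conj_part mu (Suc j))"
        using col_props(3)[OF T j r] by simp
      have rr: "Suc (conj_part mu (Suc j)) \<le> r" using r unfolding rowsj_def by simp
      have "T (r, Suc j) + ?K - (int (conj_part mu (Suc j)) - int j + int (rk ((\<lambda>r. T (r, Suc j)) ` rowsj lam mu j) (T (r, Suc j)))) =
          T (r, Suc j) + content lam rp (r, Suc j)"
        using rk rr unfolding content_def by (simp add: of_nat_diff)
      note eqn = this
      show "y (f r) - z (f r + ?K - (int (conj_part mu (Suc j)) - int j + int (rk (f ` rowsj lam mu j) (f r)))) =
          ?H (r, Suc j)" unfolding f_def eqn ..
    qed
    finally show "(\<Prod>s\<in>colT lam mu n T j. (y s - z (s + ?K -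
            (int (conj_part mu (Suc j)) - int j + int (rk (colT lam mu n T j) s))))) =
         (\<Prod>r\<in>rowsj lam mu j. ?H (r, Suc j))" .
  qed
  have "(\<Prod>j<n. \<Prod>s\<in>colT lam mu n T j. (y s - z (s + ?K -
            (int (conj_part mu (Suc j)) - int j + int (rk (colT lam mu n T j) s))))) =
        (\<Prod>j<n. \<Prod>r\<in>rowsj lam mu j. ?H (r, Suc j))" by (rule prod.cong[OF refl], rule col, simp)
  also have "\<dots> = (\<Prod>(j, r)\<in>(SIGMA j:{..<n}. rowsj lam mu j). ?H (r, Suc j))"
    by (rule prod.Sigma) (auto simp: rowsj_def)
  also have "\<dots> = (\<Prod>c\<in>skew lam mu. ?H c)"
  proof -
    have inj: "inj_on (\<lambda>(j, r). (r, Suc j)) (SIGMA j:{..<n}. rowsj lam mu j)" by (auto intro: inj_onI)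
    show ?thesis unfolding skew_Sigma using prod.reindex[OF inj, of ?H] by (simp add: split_def o_def)
  qed
  finally show ?thesis .
qed

theorem bij_sum:
  "(\<Sum>T\<in>Tab lam mu a b. \<Prod>c\<in>skew lam mu. (y (T c) - z (T c + content lam rp c))) =
   (\<Sum>S\<in>NIx lam mu n a b. \<Prod>j<n. \<Prod>s\<in>S j. (y s - z (s + (rp - 1 + int (conj_part lam 1)) -
            (int (conj_part mu (Suc j)) - int j + int (rk (S j) s)))))"
proof (rule sum.reindex_bij_witness[where i = "tabS lam mu" and j = "colT lam mu n"])
  fix T assume "T \<in> Tab lam mu a b"
  then show "tabS lam mu (colT lam mu n T) = T" by (rule tabS_colT)
next
  fix T assume "T \<in> Tab lam mu a b"
  then show "colT lam mu n T \<in> NIx lam mu n a b" by (rule colT_NI)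
next
  fix S assume "S \<in> NIx lam mu n a b"
  then show "colT lam mu n (tabS lam mu S) = S" by (rule colT_tabS)
next
  fix S assume "S \<in> NIx lam mu n a b"
  then show "tabS lam mu S \<in> Tab lam mu a b" by (rule tabS_Tab)
next
  fix T assume "T \<in> Tab lam mu a b"
  then show "(\<Prod>j<n. \<Prod>s\<in>colT lam mu n T j. (y s - z (s + (rp - 1 + int (conj_part lam 1)) -
            (int (conj_part mu (Suc j)) - int j + int (rk (colT lam mu n T j) s))))) =
         (\<Prod>c\<in>skew lam mu. (y (T c) - z (T c + content lam rp c)))" by (rule weight_eq)
qed

end

theorem theorem4p5:
  fixes lam mu :: "nat list" and r :: int and n :: nat and a b :: "nat \<Rightarrow> int"
    and y z :: "int \<Rightarrow> 'a::comm_ring_1"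
  assumes "is_partition lam" and "is_partition mu" and "part_subseteq mu lam"
    and "column_flags lam mu n a b"
  shows "flagged_S lam mu r n a b y z = (\<Sum>T\<in>ST lam mu r a b. wt lam mu y z T)"
proof -
  note plam = assms(1) and pmu = assms(2) and psub = assms(3) and cf = assms(4)
  define A where "A = (\<lambda>x. a (Suc x))"
  define B where "B = (\<lambda>x. b (Suc x))"
  define st where "st = (\<lambda>x. int (conj_part mu (Suc x)) - int x)"
  define en where "en = (\<lambda>x. int (conj_part lam (Suc x)) - int x)"
  define K where "K = r - 1 + int (conj_part lam 1)"
  define F where "F = (\<lambda>s h. y s - z (s + K - h))"
  interpret L: lgv2 n A B st en F
  proof
    fix j
    show "st (Suc j) < st j" unfolding st_def using conj_anti[of "Suc j" "Suc (Suc j)" mu] by simp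
    show "en (Suc j) < en j" unfolding en_def using conj_anti[of "Suc j" "Suc (Suc j)" lam] by simp
    assume j: "Suc j < n" and c: "st j \<le> en (Suc j)"
    have "conj_part mu (Suc j) < conj_part lam (Suc j + 1)" using c unfolding st_def en_def by simp
    have "a (Suc j) - a (Suc j + 1) \<le> int (conj_part mu (Suc j)) - int (conj_part mu (Suc j + 1)) + 1 \<and>
        b (Suc j) - b (Suc j + 1) \<le> int (conj_part lam (Suc j)) - int (conj_part lam (Suc j + 1)) + 1"
    proof -
      have "\<forall>i. 1 \<le> i \<and> i < n \<and> conj_part mu i < conj_part lam (i + 1) \<longrightarrow>
        a i - a (i + 1) \<le> int (conj_part mu i) - int (conj_part mu (i + 1)) + 1 \<and>
        b i - b (i + 1) \<le> int (conj_part lam i) - int (conj_part lam (i + 1)) + 1"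
        using cf unfolding column_flags_def by (rule conjunct2)
      then show ?thesis using j \<open>conj_part mu (Suc j) < conj_part lam (Suc j + 1)\<close>
        by (metis One_nat_def Suc_le_mono le0)
    qed
    then show "A j - st j \<le> A (Suc j) - st (Suc j) \<and> B j - en j \<le> B (Suc j) - en (Suc j)"
      unfolding A_def B_def st_def en_def by simp
  qed
  have Mc: "mat n n (\<lambda>(i0, j0). let i = i0 + 1; j = j0 + 1 in
     esup y z (a j) (b i) (conj_flag_a lam mu r a j) (conj_flag_b lam r b i)
       (int (conj_part lam i) - int i - int (conj_part mu j) + int j)) \<in> carrier_mat n n" by simp
  have "flagged_S lam mu r n a b y z = (\<Sum>x\<in>L.Fam. L.fw x)"
    unfolding flagged_S_def
  proof (rule L.det_Fam[OF Mc])
    fix i j assume i: "i < n" and j: "j < n"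
    let ?l = "en i - st j"
    let ?cc = "K - st j"
    have "mat n n (\<lambda>(i0, j0). let i = i0 + 1; j = j0 + 1 in
     esup y z (a j) (b i) (conj_flag_a lam mu r a j) (conj_flag_b lam r b i)
       (int (conj_part lam i) - int i - int (conj_part mu j) + int j)) $$ (i, j) =
       esup y z (A j) (B i) (A j + ?cc) (B i + ?cc - ?l + 1) ?l"
    proof -
      have fa: "conj_flag_a lam mu r a (j + 1) = A j + ?cc"
        unfolding conj_flag_a_def content_def A_def K_def st_def by simp
      have fb: "conj_flag_b lam r b (i + 1) = B i + ?cc - ?l + 1"
        unfolding conj_flag_b_def content_def B_def K_def st_def en_def by simp
      have fl: "int (conj_part lam (i + 1)) - int (i + 1) - int (conj_part mu (j + 1)) + int (j + 1) = ?l"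
        unfolding st_def en_def by simp
      have aj: "a (j + 1) = A j" and bi: "b (i + 1) = B i" unfolding A_def B_def by simp_all
      show ?thesis unfolding index_mat(1)[OF i j] Let_def case_prod_conv fa fb fl aj bi ..
    qed
    also have "\<dots> = colsum y z ?cc (A j) (B i) ?l" by (rule col_esup[symmetric])
    also have "\<dots> = (\<Sum>S\<in>{S. S \<subseteq> {A j..B i} \<and> int (card S) = en i - st j}. L.wtc j S)"
      unfolding colsum_def L.wtc_def L.Ht_def unfolding F_def
      by (rule sum.cong[OF refl], rule prod.cong[OF refl]) (simp add: algebra_simps)
    finally show "mat n n (\<lambda>(i0, j0). let i = i0 + 1; j = j0 + 1 in
     esup y z (a j) (b i) (conj_flag_a lam mu r a j) (conj_flag_b lam r b i)
       (int (conj_part lam i) - int i - int (conj_part mu j) + int j)) $$ (i, j) =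
       (\<Sum>S\<in>{S. S \<subseteq> {A j..B i} \<and> int (card S) = en i - st j}. L.wtc j S)" .
  qed
  also have "\<dots> = (\<Sum>S\<in>L.NI. \<Prod>j<n. L.wtc j (S j))" by (rule L.lgv_good)
  also have "L.NI = NIx lam mu n a b"
    unfolding L.NI_def L.Cols_def L.Ht_def unfolding NIx_def A_def B_def st_def en_def by simp
  also have "(\<Sum>S\<in>NIx lam mu n a b. \<Prod>j<n. L.wtc j (S j)) =
      (\<Sum>S\<in>NIx lam mu n a b. \<Prod>j<n. \<Prod>s\<in>S j. (y s - z (s + (r - 1 + int (conj_part lam 1)) -
            (int (conj_part mu (Suc j)) - int j + int (rk (S j) s)))))"
    unfolding L.wtc_def L.Ht_def unfolding F_def K_def st_def by simp
  also have "\<dots> = (\<Sum>T\<in>Tab lam mu a b. \<Prod>c\<in>skew lam mu. (y (T c) - z (T c + content lam r c)))"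
    by (rule bij_sum[OF plam pmu psub cf, symmetric])
  also have "\<dots> = (\<Sum>T\<in>ST lam mu r a b. wt lam mu y z T)" by (rule ST_sum[symmetric])
  finally show ?thesis .
qed

end
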